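(* In the setting of problem (CP1) and the prox-ADC method described in the context, suppose Assumptions 1–6 hold and let $\{x^k\}$ be generated by the method. (a) If a subsequence $\{x^{k+1}\}_{k\in N}$ ($N\subset\mathbb{N}$ infinite) converges to some $\bar x$ and $\partial^\infty_Af_p(\bar x)=\{0\}$ for $p\in I_2$, then $\{Y^k(x^{k+1})\}_{k\in N}$ is equi-bounded (all contained in one bounded set). (b) If $\{x^k\}$ is bounded and $\partial_A^\infty f_p(x)=\{0\}$ for every $x\in\bigcap_{p=1}^m\operatorname{dom}F_p$ and every $p\in I_2$, then $\{Y^k(x^{k+1})\}$ is equi-bounded, i.e. $D:=\sup_{k\in\mathbb{N}}\sup_{y\in Y^k(x^{k+1})}\|y\|<+\infty$.
   Context: Problem (CP1): integers $0\le m_1\le m$; $f_p:\mathbb{R}^n\to\mathbb{R}$; $\varphi_p:\mathbb{R}\to\mathbb{R}$ convex for $p\le m_1$; $\varphi_p=\delta_{(-\infty,0]}$ for $p>m_1$; $F_p=\varphi_p\circ f_p$. $I_1=\{p:\varphi_p$ nondecreasing$\}$, $I_2$ its complement. Monotonic decomposition $\varphi_p=\varphi^\uparrow_p+\varphi^\downarrow_p$: $(\varphi_p,0)$ if nondecreasing; $(0,\varphi_p)$ if nonincreasing; otherwise with minimizer $z^*$, $\varphi_p^\uparrow=\varphi_p(z^* )$ on $z\le z^*$, $\varphi_p$ on $z>z^*$; $\varphi^\downarrow_p=\varphi_p-\varphi_p(z^* )$ on $z\le z^*$, $0$ on $z>z^*$. Assumption 1: $f_p^k=g_p^k-h_p^k$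 ($g_p^k,h_p^k:\mathbb{R}^n\to\mathbb{R}$ convex), $f_p^k$ epi-converges to $f_p$; $-\infty<\liminf_{x'\to x,k\to\infty}f_p^k(x')\le\limsup_{x'\to x,k\to\infty}f_p^k(x')<\infty$ $\forall x$; $\varphi_p\circ f_p^k$ epi-converges to $\varphi_p\circ f_p$. Assumption 2: $X^k=\{x:f_p^k(x)\le0,p>m_1\}$, $\alpha_p^k=\sup_{X^k}[f_p^{k+1}-f^k_p]_+$; there are $x^0$, nonnegative $\widehat\alpha_p^k\ge\alpha_p^k$ ($p>m_1$) with $\sum_{k'}\widehat\alpha_p^{k'}<\infty$, $f_p^0(x^0)\le-\sum_{k'}\widehat\alpha_p^{k'}$; $\widehat\alpha_p^k=0$ for $p\le m_1$. Assumption 3: $\exists\ell_k>0$: $\min\{\mathbb H(\partial g_p^k(x),\partial g_p^k(x')),\mathbb H(\partial h_p^k(x),\partial h_p^k(x'))\}\le\ell_k\|x-x'\|$ $\forall x,x',p$. Assumption 4: each $\sum_{p\le m_1}\varphi_p(f^k_p)+\sum_{p>m_1}\delta_{(-\infty,0]}(f^k_p)$ is level-bounded. Assumption 5: for every $\bar x\in\bigcap_p\operatorname{dom}F_p$, if $0=\sum_py_pv_p$ with $(y_p,v_p)\in(\bigcup\{\mathcal N_{\operatorname{dom}\varphi_p}(t):t\in T_p(\bar x)\}\times\operatorname{con}\partial_Af_p(\bar x))\cup(\mathbb{R}\times[\partial_A^\infty f_p(\bar x)\setminus\{0\}])$ for each $p$, then all $y_p=0$; here $T_p(x)=\{t:\exists$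 infinite $N$, $x^k\to x$, $f^k_p(x^k)\to_Nt\}$, $\partial_Af_p(\bar x)=\bigcup_{x^k\to\bar x}\operatorname{Lim\,sup}_k[\partial g_p^k(x^k)-\partial h_p^k(x^k)]$, $\partial^\infty_Af_p(\bar x)=\bigcup_{x^k\to\bar x}\operatorname{Lim\,sup}^\infty_k[\partial g_p^k(x^k)-\partial h_p^k(x^k)]$ (outer limit $\{u:\exists$ infinite $N$, $u^k\in C^k$, $u^k\to_Nu\}$; horizon outer limit $\{0\}\cup\{u:\exists$ infinite $N,\lambda_k\downarrow0,u^k\in C^k,\lambda_ku^k\to_Nu\}$). Method: $\lambda>0$, positive $\epsilon_k\downarrow0,\delta_k\downarrow0$ with $\delta_k/(\lambda+\ell_k)\downarrow0$, $\sigma^k_p=\sum_{k'\ge k}\widehat\alpha^{k'}_p$; at $y$ pick $a_p\in\partial h^k_p(y)$, $b_p\in\partial g^k_p(y)$; $f^{k,\mathrm{up}}_p(x;y)=g^k_p(x)-h_p^k(y)-a_p^\top(x-y)+\sigma_p^k$; $f_p^{k,\mathrm{lo}}(x;y)=g_p^k(y)+b_p^\top(x-y)-h_p^k(x)$; $\widehat F_p^k(x;y)=\varphi_p^\uparrow(f^{k,\mathrm{up}}_p(x;y))+\varphi_p^\downarrow(f^{k,\mathrm{lo}}_p(x;y))$. Subproblem at $y$: $\operatorname{argmin}\{\sum_{p\le m_1}\widehat F^k_p(x;y)+\frac\lambda2\|x-y\|^2:f^{k,\mathrm{up}}_p(x;y)\le0,p>m_1\}$. Iterates: $x^{k,0}=x^k$,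 $x^{k,i+1}$ = subproblem solution at $y=x^{k,i}$; $i_k$ first $i$ with $f_p^{k,\mathrm{up}}(x^{k,i+1};x^{k,i})\le f_p^k(x^{k,i+1})+\sigma_p^k+\epsilon_k$ $\forall p$, $f_p^{k,\mathrm{lo}}(x^{k,i+1};x^{k,i})\ge f_p^k(x^{k,i+1})-\epsilon_k$ for $p\in I_2$, $\|x^{k,i+1}-x^{k,i}\|\le\delta_k/(\lambda+\ell_k)$; $x^{k+1}=x^{k,i_k}$. Assumption 6: for all $k$ and every pair $(x',x'')$ with $x''$ the subproblem solution at $y=x'$, if $y_p\in\mathcal N_{(-\infty,0]}(f^{k,\mathrm{up}}_p(x'';x'))$ ($p>m_1$) satisfy $0\in\sum_{p>m_1}y_p\partial f_p^{k,\mathrm{up}}(x'';x')$, then all these $y_p=0$. $Y^k(x^{k+1})$: set of $(y_{1,1},y_{1,2},\dots,y_{m,1},y_{m,2})$ with $0\in\sum_p[y_{p,1}\partial f^{k,\mathrm{up}}_p(x^{k,i_k+1};x^{k,i_k})+y_{p,2}\partial f_p^{k,\mathrm{lo}}(x^{k,i_k+1};x^{k,i_k})]+\lambda(x^{k,i_k+1}-x^{k,i_k})$, $y_{p,1}\in\partial\varphi_p^\uparrow(f_p^{k,\mathrm{up}}(x^{k,i_k+1};x^{k,i_k}))$, $y_{p,2}\in\partial\varphi_p^\downarrow(f_p^{k,\mathrm{lo}}(x^{k,i_k+1};x^{k,i_k}))$. *)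

theory Defs
  imports "HOL-Analysis.Analysis" "HOL-Library.Extended_Real"
begin

definition csubdiff :: "('a::real_inner \<Rightarrow> real) \<Rightarrow> 'a \<Rightarrow> 'a set" where
  "csubdiff f x = {v. \<forall>z. f x + inner v (z - x) \<le> f z}"

text \<open>Subdifferential (in the sense of concave analysis, i.e. the superdifferential)
  of a concave real-valued function; used for the concave minorants f^lo.\<close>
definition csupdiff :: "('a::real_inner \<Rightarrow> real) \<Rightarrow> 'a \<Rightarrow> 'a set" where
  "csupdiff f x = {v. \<forall>z. f z \<le> f x + inner v (z - x)}"

definition esubdiff1 :: "(real \<Rightarrow> ereal) \<Rightarrow> real \<Rightarrow> real set" where
  "esubdiff1 F t = {s. F t \<noteq> \<infinity> \<and> F t \<noteq> -\<infinity> \<and> (\<forall>z. F t + ereal (s * (z - t)) \<le> F z)}"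

definition ncone1 :: "real set \<Rightarrow> real \<Rightarrow> real set" where
  "ncone1 C t = (if t \<in> C then {s. \<forall>z\<in>C. s * (z - t) \<le> 0} else {})"

definition hausd :: "'a::metric_space set \<Rightarrow> 'a set \<Rightarrow> ereal" where
  "hausd S T = max (SUP x\<in>S. ereal (infdist x T)) (SUP y\<in>T. ereal (infdist y S))"

text \<open>Epi-convergence (Rockafellar--Wets, Prop. 7.2).\<close>
definition epi_conv :: "(nat \<Rightarrow> 'a::metric_space \<Rightarrow> ereal) \<Rightarrow> ('a \<Rightarrow> ereal) \<Rightarrow> bool" where
  "epi_conv Fs F \<longleftrightarrow> (\<forall>x.
      (\<forall>xs. xs \<longlonglongrightarrow> x \<longrightarrow> F x \<le> liminf (\<lambda>k. Fs k (xs k))) \<and>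
      (\<exists>xs. xs \<longlonglongrightarrow> x \<and> limsup (\<lambda>k. Fs k (xs k)) \<le> F x))"

definition conv_along :: "nat set \<Rightarrow> (nat \<Rightarrow> 'a::metric_space) \<Rightarrow> 'a \<Rightarrow> bool" where
  "conv_along N s l \<longleftrightarrow> (\<forall>e>0. \<exists>K. \<forall>k\<in>N. K \<le> k \<longrightarrow> dist (s k) l < e)"

definition Phi :: "nat \<Rightarrow> (nat \<Rightarrow> real \<Rightarrow> real) \<Rightarrow> nat \<Rightarrow> real \<Rightarrow> ereal" where
  "Phi m1 phi p t = (if p \<le> m1 then ereal (phi p t) else (if t \<le> 0 then 0 else \<infinity>))"

text \<open>Monotonic decomposition phi = phi_up + phi_dn.\<close>
definition dec_up :: "(real \<Rightarrow> ereal) \<Rightarrow> real \<Rightarrow> ereal" where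
  "dec_up F z = (if mono F then F z else if antimono F then 0
     else (let z0 = (SOME z0. \<forall>w. F z0 \<le> F w) in if z \<le> z0 then F z0 else F z))"

definition dec_dn :: "(real \<Rightarrow> ereal) \<Rightarrow> real \<Rightarrow> ereal" where
  "dec_dn F z = (if mono F then 0 else if antimono F then F z
     else (let z0 = (SOME z0. \<forall>w. F z0 \<le> F w) in if z \<le> z0 then F z - F z0 else 0))"

definition I1 :: "nat \<Rightarrow> nat \<Rightarrow> (nat \<Rightarrow> real \<Rightarrow> real) \<Rightarrow> nat set" where
  "I1 m m1 phi = {p\<in>{1..m}. mono (Phi m1 phi p)}"

definition I2 :: "nat \<Rightarrow> nat \<Rightarrow> (nat \<Rightarrow> real \<Rightarrow> real) \<Rightarrow> nat set" where
  "I2 m m1 phi = {1..m} - I1 m m1 phi"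

definition domF :: "nat \<Rightarrow> (nat \<Rightarrow> real \<Rightarrow> real) \<Rightarrow> (nat \<Rightarrow> 'a \<Rightarrow> real) \<Rightarrow> nat \<Rightarrow> 'a set" where
  "domF m1 phi f p = {x. Phi m1 phi p (f p x) \<noteq> \<infinity>}"

definition dcf :: "(nat \<Rightarrow> nat \<Rightarrow> 'a \<Rightarrow> real) \<Rightarrow> (nat \<Rightarrow> nat \<Rightarrow> 'a \<Rightarrow> real) \<Rightarrow> nat \<Rightarrow> nat \<Rightarrow> 'a \<Rightarrow> real" where
  "dcf g h k p x = g k p x - h k p x"

definition Tset :: "(nat \<Rightarrow> nat \<Rightarrow> 'a::metric_space \<Rightarrow> real) \<Rightarrow> nat \<Rightarrow> 'a \<Rightarrow> real set" where
  "Tset fk p x = {t. \<exists>N xs. infinite N \<and> xs \<longlonglongrightarrow> x \<and> conv_along N (\<lambda>k. fk k p (xs k)) t}"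

definition dcsub :: "(nat \<Rightarrow> nat \<Rightarrow> 'a::real_inner \<Rightarrow> real) \<Rightarrow> (nat \<Rightarrow> nat \<Rightarrow> 'a \<Rightarrow> real) \<Rightarrow> nat \<Rightarrow> nat \<Rightarrow> 'a \<Rightarrow> 'a set" where
  "dcsub g h k p x = {s - t |s t. s \<in> csubdiff (g k p) x \<and> t \<in> csubdiff (h k p) x}"

definition dA :: "(nat \<Rightarrow> nat \<Rightarrow> 'a::real_inner \<Rightarrow> real) \<Rightarrow> (nat \<Rightarrow> nat \<Rightarrow> 'a \<Rightarrow> real) \<Rightarrow> nat \<Rightarrow> 'a \<Rightarrow> 'a set" where
  "dA g h p x = {u. \<exists>xs N us. xs \<longlonglongrightarrow> x \<and> infinite N \<and>
      (\<forall>k\<in>N. us k \<in> dcsub g h k p (xs k)) \<and> conv_along N us u}"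

definition dAinf :: "(nat \<Rightarrow> nat \<Rightarrow> 'a::real_inner \<Rightarrow> real) \<Rightarrow> (nat \<Rightarrow> nat \<Rightarrow> 'a \<Rightarrow> real) \<Rightarrow> nat \<Rightarrow> 'a \<Rightarrow> 'a set" where
  "dAinf g h p x = insert 0 {u. \<exists>xs N us lk. xs \<longlonglongrightarrow> x \<and> infinite N \<and>
      (\<forall>k. 0 < lk k) \<and> antimono lk \<and> lk \<longlonglongrightarrow> 0 \<and>
      (\<forall>k\<in>N. us k \<in> dcsub g h k p (xs k)) \<and> conv_along N (\<lambda>k. lk k *\<^sub>R us k) u}"

definition sigma :: "(nat \<Rightarrow> nat \<Rightarrow> real) \<Rightarrow> nat \<Rightarrow> nat \<Rightarrow> real" where
  "sigma ahat k p = (\<Sum>j. ahat (k + j) p)"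

text \<open>f_p^{k,up}(x;y) with a = (a_p)_p the chosen subgradients of h^k_p at y.\<close>
definition fup :: "(nat \<Rightarrow> nat \<Rightarrow> 'a::real_inner \<Rightarrow> real) \<Rightarrow> (nat \<Rightarrow> nat \<Rightarrow> 'a \<Rightarrow> real) \<Rightarrow>
    (nat \<Rightarrow> nat \<Rightarrow> real) \<Rightarrow> (nat \<Rightarrow> 'a) \<Rightarrow> nat \<Rightarrow> nat \<Rightarrow> 'a \<Rightarrow> 'a \<Rightarrow> real" where
  "fup g h ahat a k p y x = g k p x - h k p y - inner (a p) (x - y) + sigma ahat k p"

text \<open>f_p^{k,lo}(x;y) with b = (b_p)_p the chosen subgradients of g^k_p at y.\<close>
definition flo :: "(nat \<Rightarrow> nat \<Rightarrow> 'a::real_inner \<Rightarrow> real) \<Rightarrow> (nat \<Rightarrow> nat \<Rightarrow> 'a \<Rightarrow> real) \<Rightarrow>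
    (nat \<Rightarrow> 'a) \<Rightarrow> nat \<Rightarrow> nat \<Rightarrow> 'a \<Rightarrow> 'a \<Rightarrow> real" where
  "flo g h b k p y x = g k p y + inner (b p) (x - y) - h k p x"

definition subobj :: "nat \<Rightarrow> (nat \<Rightarrow> real \<Rightarrow> real) \<Rightarrow> (nat \<Rightarrow> nat \<Rightarrow> 'a::real_inner \<Rightarrow> real) \<Rightarrow>
    (nat \<Rightarrow> nat \<Rightarrow> 'a \<Rightarrow> real) \<Rightarrow> (nat \<Rightarrow> nat \<Rightarrow> real) \<Rightarrow> real \<Rightarrow> nat \<Rightarrow> (nat \<Rightarrow> 'a) \<Rightarrow> (nat \<Rightarrow> 'a) \<Rightarrow>
    'a \<Rightarrow> 'a \<Rightarrow> ereal" where
  "subobj m1 phi g h ahat lam k a b y x =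
     (\<Sum>p\<in>{1..m1}. dec_up (Phi m1 phi p) (fup g h ahat a k p y x)
                 + dec_dn (Phi m1 phi p) (flo g h b k p y x))
     + ereal (lam / 2 * (norm (x - y))\<^sup>2)"

definition subsol :: "nat \<Rightarrow> nat \<Rightarrow> (nat \<Rightarrow> real \<Rightarrow> real) \<Rightarrow> (nat \<Rightarrow> nat \<Rightarrow> 'a::real_inner \<Rightarrow> real) \<Rightarrow>
    (nat \<Rightarrow> nat \<Rightarrow> 'a \<Rightarrow> real) \<Rightarrow> (nat \<Rightarrow> nat \<Rightarrow> real) \<Rightarrow> real \<Rightarrow> nat \<Rightarrow> (nat \<Rightarrow> 'a) \<Rightarrow> (nat \<Rightarrow> 'a) \<Rightarrow>
    'a \<Rightarrow> 'a \<Rightarrow> bool" where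
  "subsol m m1 phi g h ahat lam k a b y x \<longleftrightarrow>
     (\<forall>p\<in>{m1<..m}. fup g h ahat a k p y x \<le> 0) \<and>
     (\<forall>x'. (\<forall>p\<in>{m1<..m}. fup g h ahat a k p y x' \<le> 0) \<longrightarrow>
        subobj m1 phi g h ahat lam k a b y x \<le> subobj m1 phi g h ahat lam k a b y x')"

text \<open>Inner stopping test at (y, x) = (x^{k,i}, x^{k,i+1}).\<close>
definition stoptest :: "nat \<Rightarrow> nat \<Rightarrow> (nat \<Rightarrow> real \<Rightarrow> real) \<Rightarrow> (nat \<Rightarrow> nat \<Rightarrow> 'a::real_inner \<Rightarrow> real) \<Rightarrow>
    (nat \<Rightarrow> nat \<Rightarrow> 'a \<Rightarrow> real) \<Rightarrow> (nat \<Rightarrow> nat \<Rightarrow> real) \<Rightarrow> real \<Rightarrow> (nat \<Rightarrow> real) \<Rightarrow> (nat \<Rightarrow> real) \<Rightarrow>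
    (nat \<Rightarrow> real) \<Rightarrow> nat \<Rightarrow> (nat \<Rightarrow> 'a) \<Rightarrow> (nat \<Rightarrow> 'a) \<Rightarrow> 'a \<Rightarrow> 'a \<Rightarrow> bool" where
  "stoptest m m1 phi g h ahat lam eps del ell k a b y x \<longleftrightarrow>
     (\<forall>p\<in>{1..m}. fup g h ahat a k p y x \<le> dcf g h k p x + sigma ahat k p + eps k) \<and>
     (\<forall>p\<in>I2 m m1 phi. flo g h b k p y x \<ge> dcf g h k p x - eps k) \<and>
     norm (x - y) \<le> del k / (lam + ell k)"

text \<open>The set Y^k(x^{k+1}); fU p = f_p^{k,up}(.;x^{k,i_k}), fL p = f_p^{k,lo}(.;x^{k,i_k}),
  xn = x^{k,i_k+1}, xo = x^{k,i_k}.  Elements are pairs (y1,y2) with y1 p = y_{p,1},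
  y2 p = y_{p,2}, and zero outside {1..m}.\<close>
definition Yset :: "nat \<Rightarrow> nat \<Rightarrow> (nat \<Rightarrow> real \<Rightarrow> real) \<Rightarrow> real \<Rightarrow> (nat \<Rightarrow> 'a::real_inner \<Rightarrow> real) \<Rightarrow>
    (nat \<Rightarrow> 'a \<Rightarrow> real) \<Rightarrow> 'a \<Rightarrow> 'a \<Rightarrow> ((nat \<Rightarrow> real) \<times> (nat \<Rightarrow> real)) set" where
  "Yset m m1 phi lam fU fL xn xo = {(y1, y2).
     (\<forall>p. p \<notin> {1..m} \<longrightarrow> y1 p = 0 \<and> y2 p = 0) \<and>
     (\<forall>p\<in>{1..m}. y1 p \<in> esubdiff1 (dec_up (Phi m1 phi p)) (fU p xn) \<and>
                 y2 p \<in> esubdiff1 (dec_dn (Phi m1 phi p)) (fL p xn)) \<and>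
     (\<exists>u v. (\<forall>p\<in>{1..m}. u p \<in> csubdiff (fU p) xn \<and> v p \<in> csupdiff (fL p) xn) \<and>
        (\<Sum>p\<in>{1..m}. y1 p *\<^sub>R u p + y2 p *\<^sub>R v p) + lam *\<^sub>R (xn - xo) = 0)}"

definition ynorm :: "nat \<Rightarrow> (nat \<Rightarrow> real) \<times> (nat \<Rightarrow> real) \<Rightarrow> real" where
  "ynorm m y = sqrt (\<Sum>p\<in>{1..m}. (fst y p)\<^sup>2 + (snd y p)\<^sup>2)"

end

theory Submission
  imports Defs
begin


lemma finite_subseq_conv:
  fixes s :: "nat \<Rightarrow> 'i \<Rightarrow> 'b::heine_borel"
  assumes "finite P" "\<forall>p\<in>P. bounded (range (\<lambda>j. s j p))"
  shows "\<exists>r l. strict_mono r \<and> (\<forall>p\<in>P. (\<lambda>j. s (r j) p) \<longlonglongrightarrow> l p)"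
  using assms
proof (induction P rule: finite_induct)
  case empty
  have "strict_mono (\<lambda>j::nat. j)" by (simp add: strict_mono_def)
  then show ?case by blast
next
  case (insert q P)
  then obtain r l where r: "strict_mono r" "\<forall>p\<in>P. (\<lambda>j. s (r j) p) \<longlonglongrightarrow> l p" by blast
  have sub: "range (\<lambda>j. s (r j) q) \<subseteq> range (\<lambda>j. s j q)" by (simp add: image_subset_iff)
  have "bounded (range (\<lambda>j. s j q))" using insert.prems by simp
  then have "bounded (range (\<lambda>j. s (r j) q))" using sub bounded_subset by blast
  then obtain l' r' where r': "strict_mono r'" "((\<lambda>j. s (r j) q) \<circ> r') \<longlonglongrightarrow> l'"
    using bounded_imp_convergent_subsequence by blast
  show ?case
  proof (intro exI conjI ballI)
    show "strict_mono (r \<circ> r')" using r r' strict_mono_o by blast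
    fix p assume "p \<in> insert q P"
    show "(\<lambda>j. s ((r \<circ> r') j) p) \<longlonglongrightarrow> (l(q := l')) p"
    proof (cases "p = q")
      case True then show ?thesis using r' by (simp add: o_def)
    next
      case False
      then have "p \<in> P" using \<open>p \<in> insert q P\<close> by auto
      then have "((\<lambda>j. s (r j) p) \<circ> r') \<longlonglongrightarrow> l p" using r r' LIMSEQ_subseq_LIMSEQ by blast
      then show ?thesis using False by (simp add: o_def)
    qed
  qed
qed

lemma ev_bounded_range:
  fixes f :: "nat \<Rightarrow> 'b::real_normed_vector"
  assumes "eventually (\<lambda>j. norm (f j) \<le> B) sequentially"
  shows "bounded (range f)"
proof -
  obtain J where J: "\<forall>j\<ge>J. norm (f j) \<le> B" using assms by (auto simp: eventually_sequentially)
  have "range f \<subseteq> f ` {..<J} \<union> cball 0 B"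
  proof
    fix y assume "y \<in> range f"
    then obtain j where j: "y = f j" by auto
    show "y \<in> f ` {..<J} \<union> cball 0 B"
    proof (cases "j < J")
      case True then show ?thesis using j by auto
    next
      case False then show ?thesis using j J by (auto simp: dist_norm)
    qed
  qed
  moreover have "bounded (f ` {..<J} \<union> cball 0 B)" by (simp add: finite_imp_bounded)
  ultimately show ?thesis by (rule bounded_subset[rotated])
qed

lemma inv_sm: "strict_mono (\<sigma>::nat\<Rightarrow>nat) \<Longrightarrow> inv \<sigma> (\<sigma> j) = j"
  by (simp add: inv_f_f strict_mono_imp_inj_on)

lemma conv_along_range:
  fixes F :: "nat \<Rightarrow> 'b::metric_space" and \<sigma> :: "nat \<Rightarrow> nat"
  assumes "strict_mono \<sigma>" "(\<lambda>j. F (\<sigma> j)) \<longlonglongrightarrow> l"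
  shows "conv_along (range \<sigma>) F l"
  unfolding conv_along_def
proof (intro allI impI)
  fix e :: real assume "0 < e"
  then obtain J where J: "\<forall>j\<ge>J. dist (F (\<sigma> j)) l < e"
    using assms(2) by (auto simp: lim_sequentially)
  show "\<exists>K. \<forall>k\<in>range \<sigma>. K \<le> k \<longrightarrow> dist (F k) l < e"
  proof (intro exI ballI impI)
    fix k assume "k \<in> range \<sigma>" "\<sigma> J \<le> k"
    then obtain j where "k = \<sigma> j" by auto
    with \<open>\<sigma> J \<le> k\<close> have "J \<le> j" using assms(1) strict_mono_less_eq by blast
    then show "dist (F k) l < e" using J \<open>k = \<sigma> j\<close> by auto
  qed
qed

lemma merge_lim:
  fixes s z :: "nat \<Rightarrow> 'b::metric_space" and \<sigma> :: "nat \<Rightarrow> nat"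
  assumes "strict_mono \<sigma>" "s \<longlonglongrightarrow> l" "z \<longlonglongrightarrow> l"
  shows "(\<lambda>k. if k \<in> range \<sigma> then s (inv \<sigma> k) else z k) \<longlonglongrightarrow> l"
  unfolding lim_sequentially
proof (intro allI impI)
  fix e :: real assume "0 < e"
  then obtain J where J: "\<forall>j\<ge>J. dist (s j) l < e"
    using assms(2) by (auto simp: lim_sequentially)
  obtain J2 where J2: "\<forall>j\<ge>J2. dist (z j) l < e"
    using assms(3) \<open>0<e\<close> by (auto simp: lim_sequentially)
  show "\<exists>K. \<forall>k\<ge>K. dist (if k \<in> range \<sigma> then s (inv \<sigma> k) else z k) l < e"
  proof (intro exI allI impI)
    fix k assume k: "max (\<sigma> J) J2 \<le> k"
    show "dist (if k \<in> range \<sigma> then s (inv \<sigma> k) else z k) l < e"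
    proof (cases "k \<in> range \<sigma>")
      case True
      then obtain j where "k = \<sigma> j" by auto
      with k have "J \<le> j" using assms(1) strict_mono_less_eq by fastforce
      then show ?thesis using J True \<open>k = \<sigma> j\<close> inv_sm[OF assms(1)] by auto
    next
      case False then show ?thesis using J2 k by auto
    qed
  qed
qed

lemma conv_along_sub:
  fixes s :: "nat \<Rightarrow> 'b::metric_space"
  assumes "conv_along N s l" "strict_mono \<kappa>" "\<forall>j. \<kappa> j \<in> N"
  shows "(\<lambda>j. s (\<kappa> j)) \<longlonglongrightarrow> l"
  unfolding lim_sequentially
proof (intro allI impI)
  fix e :: real assume "0 < e"
  then obtain K where K: "\<forall>k\<in>N. K \<le> k \<longrightarrow> dist (s k) l < e" using assms(1) by (auto simp: conv_along_def)
  show "\<exists>J. \<forall>j\<ge>J. dist (s (\<kappa> j)) l < e"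
  proof (intro exI allI impI)
    fix j assume "K \<le> j"
    then have "K \<le> \<kappa> j" using seq_suble[OF assms(2), of j] by linarith
    then show "dist (s (\<kappa> j)) l < e" using K assms(3) by blast
  qed
qed

lemma Tset_intro:
  assumes "strict_mono \<sigma>" "xs \<longlonglongrightarrow> x" "(\<lambda>j. fk (\<sigma> j) p (xs j)) \<longlonglongrightarrow> t"
  shows "t \<in> Tset fk p x"
proof -
  define X where "X = (\<lambda>k. if k \<in> range \<sigma> then xs (inv \<sigma> k) else x)"
  have X: "X \<longlonglongrightarrow> x" unfolding X_def by (rule merge_lim[OF assms(1,2)]) simp
  have "X (\<sigma> j) = xs j" for j unfolding X_def using inv_sm[OF assms(1)] by auto
  then have "conv_along (range \<sigma>) (\<lambda>k. fk k p (X k)) t"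
    using conv_along_range[OF assms(1), of "\<lambda>k. fk k p (X k)"] assms(3) by simp
  moreover have "infinite (range \<sigma>)"
    using assms(1) strict_mono_imp_inj_on range_inj_infinite by blast
  ultimately show ?thesis unfolding Tset_def using X by (intro CollectI exI[of _ "range \<sigma>"] exI[of _ X]) simp
qed

lemma dA_intro:
  assumes "strict_mono \<sigma>" "xs \<longlonglongrightarrow> x" "\<forall>j. us j \<in> dcsub g h (\<sigma> j) p (xs j)" "us \<longlonglongrightarrow> u"
  shows "u \<in> dA g h p x"
proof -
  define X where "X = (\<lambda>k. if k \<in> range \<sigma> then xs (inv \<sigma> k) else x)"
  have X: "X \<longlonglongrightarrow> x" unfolding X_def by (rule merge_lim[OF assms(1,2)]) simp
  have X2: "X (\<sigma> j) = xs j" for j unfolding X_def using inv_sm[OF assms(1)] by auto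
  define U where "U = (\<lambda>k. us (inv \<sigma> k))"
  have U2: "U (\<sigma> j) = us j" for j unfolding U_def using inv_sm[OF assms(1)] by auto
  have "conv_along (range \<sigma>) U u"
    using conv_along_range[OF assms(1), of U] assms(4) U2 by simp
  moreover have "infinite (range \<sigma>)"
    using assms(1) strict_mono_imp_inj_on range_inj_infinite by blast
  moreover have "\<forall>k\<in>range \<sigma>. U k \<in> dcsub g h k p (X k)" using X2 U2 assms(3) by auto
  ultimately show ?thesis unfolding dA_def using X
    by (intro CollectI exI[of _ X] exI[of _ "range \<sigma>"] exI[of _ U]) simp
qed

lemma strict_dec_subseq:
  fixes \<beta> :: "nat \<Rightarrow> real"
  assumes "\<forall>j. 0 < \<beta> j" "\<beta> \<longlonglongrightarrow> 0"
  shows "\<exists>r. strict_mono r \<and> (\<forall>j. \<beta> (r (Suc j)) < \<beta> (r j))"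
proof -
  have ex: "\<exists>i>n. \<beta> i < \<beta> n" for n
  proof -
    have "eventually (\<lambda>i. \<beta> i < \<beta> n) sequentially"
      using assms(2) assms(1) order_tendstoD(2) by blast
    then obtain I where "\<forall>i\<ge>I. \<beta> i < \<beta> n" by (auto simp: eventually_sequentially)
    then show ?thesis by (intro exI[of _ "max I (Suc n)"]) auto
  qed
  define nx where "nx n = (SOME i. i > n \<and> \<beta> i < \<beta> n)" for n
  have nx: "nx n > n \<and> \<beta> (nx n) < \<beta> n" for n unfolding nx_def using someI_ex[OF ex[of n]] by blast
  define r where "r j = (nx ^^ j) 0" for j
  have "r (Suc j) = nx (r j)" for j by (simp add: r_def)
  then show ?thesis using nx by (auto simp: strict_mono_Suc_iff intro!: exI[of _ r])
qed

lemma dAinf_intro: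
  assumes "strict_mono \<sigma>" "xs \<longlonglongrightarrow> x" "\<forall>j. us j \<in> dcsub g h (\<sigma> j) p (xs j)"
    "\<forall>j. 0 < \<beta> j" "\<beta> \<longlonglongrightarrow> 0" "(\<lambda>j. \<beta> j *\<^sub>R us j) \<longlonglongrightarrow> d"
  shows "d \<in> dAinf g h p x"
proof -
  obtain r where r: "strict_mono r" "\<forall>j. \<beta> (r (Suc j)) < \<beta> (r j)"
    using strict_dec_subseq[OF assms(4,5)] by blast
  define \<sigma>' where "\<sigma>' = \<sigma> \<circ> r"
  have sm: "strict_mono \<sigma>'" unfolding \<sigma>'_def using assms(1) r(1) strict_mono_o by blast
  define b' where "b' = \<beta> \<circ> r"
  have b'anti: "b' j' \<le> b' j" if "j \<le> j'" for j j'
    using that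
  proof (induction j' rule: dec_induct)
    case base then show ?case by simp
  next
    case (step n) then show ?case using r(2)[rule_format, of n] by (simp add: b'_def)
  qed
  define L where "L k = (LEAST j. k \<le> \<sigma>' j)" for k
  have Lk: "k \<le> \<sigma>' (L k)" for k
    unfolding L_def by (rule LeastI[of _ k]) (simp add: seq_suble[OF sm])
  have Lle: "L k \<le> j" if "k \<le> \<sigma>' j" for k j
    unfolding L_def using that by (rule Least_le)
  have Ls: "L (\<sigma>' j) = j" for j
  proof -
    have "L (\<sigma>' j) \<le> j" by (rule Lle) simp
    moreover have "j \<le> L (\<sigma>' j)" using Lk[of "\<sigma>' j"] sm strict_mono_less_eq by blast
    ultimately show ?thesis by simp
  qed
  define lk where "lk k = b' (L k)" for k
  have lkpos: "\<forall>k. 0 < lk k" unfolding lk_def b'_def using assms(4) by simp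
  have lkanti: "antimono lk"
  proof (rule antimonoI)
    fix k k' :: nat assume "k \<le> k'"
    then have "L k \<le> L k'" using Lk[of k'] Lle by (meson order_trans)
    then show "lk k' \<le> lk k" unfolding lk_def by (rule b'anti)
  qed
  have Lat: "filterlim L sequentially sequentially"
    unfolding filterlim_at_top
  proof (intro allI)
    fix Z
    show "eventually (\<lambda>k. Z \<le> L k) sequentially"
      unfolding eventually_sequentially
    proof (intro exI[of _ "Suc (\<sigma>' Z)"] allI impI)
      fix k assume k: "Suc (\<sigma>' Z) \<le> k"
      show "Z \<le> L k"
      proof (rule ccontr)
        assume "\<not> Z \<le> L k"
        then have "\<sigma>' (L k) < \<sigma>' Z" using sm by (simp add: strict_mono_less)
        then show False using Lk[of k] k by simp
      qed
    qed
  qed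
  have b'0: "b' \<longlonglongrightarrow> 0" unfolding b'_def using LIMSEQ_subseq_LIMSEQ[OF assms(5) r(1)] .
  have lk0: "lk \<longlonglongrightarrow> 0" unfolding lk_def using filterlim_compose[OF b'0 Lat] by (simp add: o_def)
  define X where "X = (\<lambda>k. if k \<in> range \<sigma>' then (xs \<circ> r) (inv \<sigma>' k) else x)"
  have xr: "(xs \<circ> r) \<longlonglongrightarrow> x" using LIMSEQ_subseq_LIMSEQ[OF assms(2) r(1)] .
  have X: "X \<longlonglongrightarrow> x" unfolding X_def by (rule merge_lim[OF sm xr]) simp
  have X2: "X (\<sigma>' j) = xs (r j)" for j unfolding X_def using inv_sm[OF sm] by auto
  define U where "U = (\<lambda>k. (us \<circ> r) (inv \<sigma>' k))"
  have U2: "U (\<sigma>' j) = us (r j)" for j unfolding U_def using inv_sm[OF sm] by auto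
  have "(\<lambda>j. lk (\<sigma>' j) *\<^sub>R U (\<sigma>' j)) = (\<lambda>j. \<beta> j *\<^sub>R us j) \<circ> r"
    by (auto simp: lk_def Ls U2 b'_def)
  then have "(\<lambda>j. lk (\<sigma>' j) *\<^sub>R U (\<sigma>' j)) \<longlonglongrightarrow> d"
    using LIMSEQ_subseq_LIMSEQ[OF assms(6) r(1)] by simp
  then have "conv_along (range \<sigma>') (\<lambda>k. lk k *\<^sub>R U k) d"
    using conv_along_range[OF sm, of "\<lambda>k. lk k *\<^sub>R U k"] by simp
  moreover have "infinite (range \<sigma>')"
    using sm strict_mono_imp_inj_on range_inj_infinite by blast
  moreover have "\<forall>k\<in>range \<sigma>'. U k \<in> dcsub g h k p (X k)"
    using X2 U2 assms(3) by (auto simp: \<sigma>'_def)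
  ultimately show ?thesis unfolding dAinf_def using X lkpos lkanti lk0
    by (intro insertI2 CollectI exI[of _ X] exI[of _ "range \<sigma>'"] exI[of _ U] exI[of _ lk]) simp
qed



lemma closed_csubdiff: "closed (csubdiff f (x::'a::real_inner))"
proof -
  have "csubdiff f x = (\<Inter>z. {v. f x + inner v (z - x) \<le> f z})"
    unfolding csubdiff_def by auto
  moreover have "closed {v. f x + inner v (z - x) \<le> f z}" for z
    by (intro closed_Collect_le continuous_intros)
  ultimately show ?thesis by (simp add: closed_INT)
qed

lemma bounded_on_cball:
  fixes f :: "'a::euclidean_space \<Rightarrow> real"
  assumes "convex_on UNIV f"
  shows "\<exists>M. \<forall>z\<in>cball x r. \<bar>f z\<bar> \<le> M"
proof -
  have "continuous_on UNIV f" using convex_on_continuous[OF open_UNIV assms] .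
  then have "continuous_on (cball x r) f" by (rule continuous_on_subset) simp
  then have "compact (f ` cball x r)" by (intro compact_continuous_image) auto
  then have "bounded (f ` cball x r)" by (rule compact_imp_bounded)
  then obtain M where "\<forall>y\<in>f ` cball x r. norm y \<le> M" by (auto simp: bounded_iff)
  then show ?thesis by auto
qed

lemma bounded_csubdiff:
  fixes f :: "'a::euclidean_space \<Rightarrow> real"
  assumes "convex_on UNIV f"
  shows "\<exists>R. \<forall>v\<in>csubdiff f x. norm v \<le> R"
proof -
  obtain M where M: "\<forall>z\<in>cball x 1. \<bar>f z\<bar> \<le> M" using bounded_on_cball[OF assms] by blast
  have "norm v \<le> 2 * M" if v: "v \<in> csubdiff f x" for v
  proof (cases "v = 0")
    case True then show ?thesis using M[rule_format, of x] by simp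
  next
    case False
    define z where "z = x + (1 / norm v) *\<^sub>R v"
    have "z \<in> cball x 1" using False by (simp add: z_def dist_norm)
    have "f x + inner v (z - x) \<le> f z" using v by (simp add: csubdiff_def)
    moreover have "inner v (z - x) = norm v"
      using False by (simp add: z_def inner_commute power2_norm_eq_inner[symmetric] power2_eq_square)
    moreover have "\<bar>f z\<bar> \<le> M" using M \<open>z \<in> cball x 1\<close> by blast
    moreover have "\<bar>f x\<bar> \<le> M" using M by simp
    ultimately show ?thesis by linarith
  qed
  then show ?thesis by blast
qed

lemma hausd_left:
  fixes S T :: "'a::metric_space set"
  assumes "hausd S T \<le> ereal r" "s \<in> S"
  shows "infdist s T \<le> r"
proof -
  have "ereal (infdist s T) \<le> (SUP x\<in>S. ereal (infdist x T))" using assms(2) by (rule SUP_upper)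
  also have "\<dots> \<le> hausd S T" unfolding hausd_def by simp
  finally have "ereal (infdist s T) \<le> ereal r" using assms(1) by (rule order_trans)
  then show ?thesis by simp
qed

lemma hausd_right:
  fixes S T :: "'a::metric_space set"
  assumes "hausd S T \<le> ereal r" "t \<in> T"
  shows "infdist t S \<le> r"
proof -
  have "ereal (infdist t S) \<le> (SUP y\<in>T. ereal (infdist y S))" using assms(2) by (rule SUP_upper)
  also have "\<dots> \<le> hausd S T" unfolding hausd_def by simp
  finally have "ereal (infdist t S) \<le> ereal r" using assms(1) by (rule order_trans)
  then show ?thesis by simp
qed

lemma shift:
  fixes G H :: "'a::euclidean_space \<Rightarrow> real"
  assumes s: "s \<in> csubdiff G z" and a: "a \<in> csubdiff H z'"
    and sG: "sG \<in> csubdiff G z'" and tH: "tH \<in> csubdiff H z"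
    and hd: "min (hausd (csubdiff G z) (csubdiff G z')) (hausd (csubdiff H z) (csubdiff H z')) \<le> ereal r"
  shows "\<exists>w \<zeta>. (\<zeta> = z \<or> \<zeta> = z') \<and> w \<in> {s - t |s t. s \<in> csubdiff G \<zeta> \<and> t \<in> csubdiff H \<zeta>}
            \<and> norm (w - (s - a)) \<le> r"
proof (cases "hausd (csubdiff G z) (csubdiff G z') \<le> ereal r")
  case True
  have "infdist s (csubdiff G z') \<le> r" using hausd_left[OF True s] .
  moreover obtain s' where s': "s' \<in> csubdiff G z'" "infdist s (csubdiff G z') = dist s s'"
    using infdist_attains_inf[OF closed_csubdiff, of G z' s] sG by blast
  ultimately have "norm ((s' - a) - (s - a)) \<le> r" by (simp add: dist_norm norm_minus_commute)
  then show ?thesis using s' a by blast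
next
  case False
  then have H: "hausd (csubdiff H z) (csubdiff H z') \<le> ereal r" using hd by (simp add: min_def split: if_splits)
  have "infdist a (csubdiff H z) \<le> r" using hausd_right[OF H a] .
  moreover obtain a' where a': "a' \<in> csubdiff H z" "infdist a (csubdiff H z) = dist a a'"
    using infdist_attains_inf[OF closed_csubdiff, of H z a] tH by blast
  ultimately have "norm ((s - a') - (s - a)) \<le> r" by (simp add: dist_norm)
  then show ?thesis using s a' by blast
qed

lemma csubdiff_fup:
  assumes "u \<in> csubdiff (fup g h ahat A k p y) xn"
  shows "u + A p \<in> csubdiff (g k p) xn"
  using assms unfolding csubdiff_def fup_def
  by (auto simp: inner_diff_right inner_add_left algebra_simps)

lemma csupdiff_flo:
  assumes "v \<in> csupdiff (flo g h B k p y) xn"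
  shows "B p - v \<in> csubdiff (h k p) xn"
  using assms unfolding csubdiff_def csupdiff_def flo_def
  by (auto simp: inner_diff_right inner_diff_left algebra_simps)

lemma fup_ge:
  assumes "A p \<in> csubdiff (h k p) y"
  shows "dcf g h k p xn + sigma ahat k p \<le> fup g h ahat A k p y xn"
  using assms unfolding csubdiff_def fup_def dcf_def
  by (auto simp: algebra_simps elim!: allE[of _ xn])

lemma flo_le:
  assumes "B p \<in> csubdiff (g k p) y"
  shows "flo g h B k p y xn \<le> dcf g h k p xn"
  using assms unfolding csubdiff_def flo_def dcf_def
  by (auto simp: algebra_simps elim!: allE[of _ xn])

lemma esub_zero: "s \<in> esubdiff1 (\<lambda>z. 0) t \<Longrightarrow> s = 0"
  unfolding esubdiff1_def zero_ereal_def
  apply clarsimp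
  apply (frule spec[of _ "t + 1"], drule spec[of _ "t - 1"])
  by simp

lemma esub_fin:
  assumes "s \<in> esubdiff1 F t"
  obtains c where "F t = ereal c" "\<And>z. ereal (c + s * (z - t)) \<le> F z"
proof -
  from assms have "F t \<noteq> \<infinity>" "F t \<noteq> -\<infinity>" and le: "\<And>z. F t + ereal (s * (z - t)) \<le> F z"
    by (auto simp: esubdiff1_def)
  then obtain c where c: "F t = ereal c" by (cases "F t") auto
  show ?thesis using that[OF c] le c by simp
qed

lemma esub_mono_nonneg:
  assumes "mono F" "s \<in> esubdiff1 F t"
  shows "0 \<le> s"
proof -
  obtain c where c: "F t = ereal c" "\<And>z. ereal (c + s * (z - t)) \<le> F z" using esub_fin[OF assms(2)] by blast
  have "F (t - 1) \<le> F t" using assms(1) by (simp add: mono_def)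
  then have "ereal (c + s * (t - 1 - t)) \<le> ereal c" using c(1) c(2)[of "t-1"] order_trans by metis
  then show ?thesis by simp
qed

lemma esub_bound:
  assumes "s \<in> esubdiff1 F t" "F (t + 1) \<le> ereal K" "F (t - 1) \<le> ereal K" "ereal K' \<le> F t"
  shows "\<bar>s\<bar> \<le> K - K'"
proof -
  obtain c where c: "F t = ereal c" "\<And>z. ereal (c + s * (z - t)) \<le> F z" using esub_fin[OF assms(1)] by blast
  have "ereal (c + s * (t + 1 - t)) \<le> ereal K" using c(2)[of "t+1"] assms(2) order_trans by metis
  moreover have "ereal (c + s * (t - 1 - t)) \<le> ereal K" using c(2)[of "t-1"] assms(3) order_trans by metis
  moreover have "K' \<le> c" using assms(4) c(1) by simp
  ultimately show ?thesis by simp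
qed

lemma Phi_big: "m1 < p \<Longrightarrow> Phi m1 phi p = (\<lambda>t. if t \<le> 0 then 0 else \<infinity>)"
  by (auto simp: Phi_def fun_eq_iff)

lemma Phi_big_mono: "m1 < p \<Longrightarrow> mono (Phi m1 phi p)"
  by (auto simp: Phi_big mono_def)

lemma esub_ind:
  assumes "m1 < p" "s \<in> esubdiff1 (dec_up (Phi m1 phi p)) t"
  shows "t \<le> 0 \<and> 0 \<le> s \<and> (0 < s \<longrightarrow> t = 0)"
proof -
  have du: "dec_up (Phi m1 phi p) = Phi m1 phi p" using Phi_big_mono[OF assms(1)]
    by (simp add: dec_up_def fun_eq_iff)
  have s: "s \<in> esubdiff1 (\<lambda>t. if t \<le> 0 then 0 else \<infinity>) t" using assms(2) du Phi_big[OF assms(1)] by simp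
  then have t: "t \<le> 0" by (auto simp: esubdiff1_def split: if_splits)
  have s0: "0 \<le> s" using esub_mono_nonneg[OF Phi_big_mono[OF assms(1)]] assms(2) du by simp
  have "t = 0" if "0 < s"
  proof (rule ccontr)
    assume "t \<noteq> 0"
    then have "t < 0" using t by simp
    have "(if t \<le> 0 then 0 else \<infinity>) + ereal (s * (0 - t)) \<le> (if (0::real) \<le> 0 then 0 else \<infinity>)"
      using s unfolding esubdiff1_def by blast
    then have "s * (- t) \<le> 0" using t by (simp add: zero_ereal_def)
    moreover have "0 < s * (-t)" using \<open>t < 0\<close> that by (intro mult_pos_pos) auto
    ultimately show False by simp
  qed
  then show ?thesis using t s0 by blast
qed

lemma dec_dn_mono: "mono F \<Longrightarrow> dec_dn F = (\<lambda>z. 0)"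
  by (simp add: dec_dn_def fun_eq_iff)

lemma dec_up_mono: "mono F \<Longrightarrow> dec_up F = F"
  by (simp add: dec_up_def fun_eq_iff)

lemma dec_gen:
  assumes F: "\<forall>z. F z = ereal (G z)"
  shows "\<exists>c\<ge>0. \<forall>z. \<bar>dec_up F z\<bar> \<le> ereal (\<bar>G z\<bar> + c) \<and> \<bar>dec_dn F z\<bar> \<le> ereal (\<bar>G z\<bar> + c)"
proof -
  define z0 where "z0 = (SOME z0. \<forall>w. F z0 \<le> F w)"
  have du: "dec_up F z = (if mono F then F z else if antimono F then 0 else if z \<le> z0 then F z0 else F z)" for z
    by (simp add: dec_up_def z0_def Let_def)
  have dd: "dec_dn F z = (if mono F then 0 else if antimono F then F z else if z \<le> z0 then F z - F z0 else 0)" for z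
    by (simp add: dec_dn_def z0_def Let_def)
  show ?thesis
    by (rule exI[of _ "\<bar>G z0\<bar>"]) (auto simp: du dd F)
qed

lemma dec_small_bound:
  assumes "p \<le> m1"
  shows "\<exists>c\<ge>0. \<forall>z. \<bar>dec_up (Phi m1 phi p) z\<bar> \<le> ereal (\<bar>phi p z\<bar> + c) \<and>
                   \<bar>dec_dn (Phi m1 phi p) z\<bar> \<le> ereal (\<bar>phi p z\<bar> + c)"
  by (rule dec_gen) (simp add: Phi_def assms)

lemma phi_bounded_interval:
  fixes \<phi> :: "real \<Rightarrow> real"
  assumes "convex_on UNIV \<phi>"
  shows "\<exists>M. \<forall>z. \<bar>z\<bar> \<le> T \<longrightarrow> \<bar>\<phi> z\<bar> \<le> M"
proof -
  obtain M where "\<forall>z\<in>cball 0 T. \<bar>\<phi> z\<bar> \<le> M" using bounded_on_cball[OF assms, of 0 T] by blast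
  then show ?thesis by (intro exI[of _ M]) (auto simp: dist_real_def)
qed

lemma SUBB:
  assumes "1 \<le> p" "p \<le> m1" "\<forall>p\<in>{1..m1}. convex_on UNIV (phi p)"
  shows "\<exists>M\<ge>0. \<forall>t s. \<bar>t\<bar> \<le> T \<longrightarrow>
     (s \<in> esubdiff1 (dec_up (Phi m1 phi p)) t \<or> s \<in> esubdiff1 (dec_dn (Phi m1 phi p)) t) \<longrightarrow> \<bar>s\<bar> \<le> M"
proof -
  obtain c where c: "c \<ge> 0" "\<forall>z. \<bar>dec_up (Phi m1 phi p) z\<bar> \<le> ereal (\<bar>phi p z\<bar> + c) \<and>
                   \<bar>dec_dn (Phi m1 phi p) z\<bar> \<le> ereal (\<bar>phi p z\<bar> + c)"
    using dec_small_bound[OF assms(2)] by blast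
  obtain M0 where M0: "\<forall>z. \<bar>z\<bar> \<le> T + 1 \<longrightarrow> \<bar>phi p z\<bar> \<le> M0"
    using phi_bounded_interval[of "phi p" "T+1"] assms by auto
  define M where "M = max 0 M0"
  have M: "\<forall>z. \<bar>z\<bar> \<le> T + 1 \<longrightarrow> \<bar>phi p z\<bar> \<le> M" using M0 by (auto simp: M_def)
  have M0: "0 \<le> M" by (simp add: M_def)
  have key: "\<bar>s\<bar> \<le> 2 * (M + c)"
    if t: "\<bar>t\<bar> \<le> T" and F: "\<forall>z. \<bar>F z\<bar> \<le> ereal (\<bar>phi p z\<bar> + c)" and s: "s \<in> esubdiff1 F t" for s t F
  proof -
    have ub: "F z \<le> ereal (M + c)" if "\<bar>z\<bar> \<le> T + 1" for z
    proof -
      have "F z \<le> \<bar>F z\<bar>" by (cases "F z") auto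
      also have "\<dots> \<le> ereal (\<bar>phi p z\<bar> + c)" using F by blast
      also have "\<dots> \<le> ereal (M + c)" using M that by simp
      finally show ?thesis .
    qed
    have lb: "ereal (-(M + c)) \<le> F t"
    proof -
      have "\<bar>F t\<bar> \<le> ereal (M + c)"
        using F[rule_format, of t] M[rule_format, of t] t order_trans by fastforce
      then show ?thesis by (cases "F t") auto
    qed
    have "\<bar>s\<bar> \<le> (M + c) - (-(M + c))"
      by (rule esub_bound[OF s ub ub lb]) (use t in auto)
    then show ?thesis by simp
  qed
  have up: "\<forall>z. \<bar>dec_up (Phi m1 phi p) z\<bar> \<le> ereal (\<bar>phi p z\<bar> + c)" using c by blast
  have dn: "\<forall>z. \<bar>dec_dn (Phi m1 phi p) z\<bar> \<le> ereal (\<bar>phi p z\<bar> + c)" using c by blast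
  show ?thesis
  proof (intro exI[of _ "2 * (M + c)"] conjI allI impI)
    show "0 \<le> 2 * (M + c)" using c M0 by simp
    fix t s assume "\<bar>t\<bar> \<le> T" "s \<in> esubdiff1 (dec_up (Phi m1 phi p)) t \<or> s \<in> esubdiff1 (dec_dn (Phi m1 phi p)) t"
    then show "\<bar>s\<bar> \<le> 2 * (M + c)" using key[OF _ up] key[OF _ dn] by blast
  qed
qed



lemma epi_sub:
  fixes Fs :: "nat \<Rightarrow> 'a::metric_space \<Rightarrow> ereal" and \<sigma> :: "nat \<Rightarrow> nat"
  assumes "epi_conv Fs F" "strict_mono \<sigma>" "zs \<longlonglongrightarrow> x" "\<forall>j. Fs (\<sigma> j) (zs j) \<le> 0"
  shows "F x \<le> 0"
proof -
  from assms(1) obtain rs where rs: "rs \<longlonglongrightarrow> x"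
    and lowr: "\<forall>xs. xs \<longlonglongrightarrow> x \<longrightarrow> F x \<le> liminf (\<lambda>k. Fs k (xs k))"
    unfolding epi_conv_def by blast
  define X where "X = (\<lambda>k. if k \<in> range \<sigma> then zs (inv \<sigma> k) else rs k)"
  have X: "X \<longlonglongrightarrow> x" unfolding X_def by (rule merge_lim[OF assms(2,3) rs])
  have X2: "X (\<sigma> j) = zs j" for j unfolding X_def using inv_sm[OF assms(2)] by auto
  have eq: "(\<lambda>k. Fs k (X k)) \<circ> \<sigma> = (\<lambda>j. Fs (\<sigma> j) (zs j))" using X2 by (auto simp: o_def)
  have "F x \<le> liminf (\<lambda>k. Fs k (X k))" using lowr X by blast
  also have "\<dots> \<le> liminf ((\<lambda>k. Fs k (X k)) \<circ> \<sigma>)" by (rule liminf_subseq_mono[OF assms(2)])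
  also have "\<dots> = liminf (\<lambda>j. Fs (\<sigma> j) (zs j))" using eq by simp
  also have "\<dots> \<le> liminf (\<lambda>j. 0::ereal)" by (rule Liminf_mono) (use assms(4) in auto)
  also have "\<dots> = 0" by (simp add: Liminf_const)
  finally show ?thesis .
qed

lemma locb:
  fixes F :: "nat \<Rightarrow> 'a::metric_space \<Rightarrow> real" and \<kappa> :: "nat \<Rightarrow> nat"
  assumes "- \<infinity> < Liminf (nhds z \<times>\<^sub>F sequentially) (\<lambda>(z', k). ereal (F k z'))"
    "Limsup (nhds z \<times>\<^sub>F sequentially) (\<lambda>(z', k). ereal (F k z')) < \<infinity>"
    "zs \<longlonglongrightarrow> z" "strict_mono \<kappa>"
  shows "\<exists>c C. eventually (\<lambda>j. c \<le> F (\<kappa> j) (zs j) \<and> F (\<kappa> j) (zs j) \<le> C) sequentially"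
proof -
  have lim: "filterlim (\<lambda>j. (zs j, \<kappa> j)) (nhds z \<times>\<^sub>F sequentially) sequentially"
    by (rule filterlim_Pair[OF assms(3) filterlim_subseq[OF assms(4)]])
  obtain c where c: "ereal c < Liminf (nhds z \<times>\<^sub>F sequentially) (\<lambda>(z', k). ereal (F k z'))"
    using ereal_dense2[OF assms(1)] by blast
  have ev1: "eventually (\<lambda>q. ereal (c - 1) < (\<lambda>(z', k). ereal (F k z')) q) (nhds z \<times>\<^sub>F sequentially)"
    using c le_Liminf_iff[THEN iffD1, OF less_imp_le[OF c], rule_format, of "ereal (c - 1)"] by simp
  obtain C where C: "Limsup (nhds z \<times>\<^sub>F sequentially) (\<lambda>(z', k). ereal (F k z')) < ereal C"
    using ereal_dense2[OF assms(2)] by blast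
  have ev2: "eventually (\<lambda>q. (\<lambda>(z', k). ereal (F k z')) q < ereal C) (nhds z \<times>\<^sub>F sequentially)"
    using Limsup_lessD[OF C] .
  have "eventually (\<lambda>q. ereal (c - 1) < (\<lambda>(z', k). ereal (F k z')) q \<and> (\<lambda>(z', k). ereal (F k z')) q < ereal C)
      (nhds z \<times>\<^sub>F sequentially)" using eventually_conj[OF ev1 ev2] .
  then have "eventually (\<lambda>j. ereal (c - 1) < (\<lambda>(z', k). ereal (F k z')) (zs j, \<kappa> j) \<and>
      (\<lambda>(z', k). ereal (F k z')) (zs j, \<kappa> j) < ereal C) sequentially"
    using lim unfolding filterlim_iff by blast
  then have "eventually (\<lambda>j. c - 1 \<le> F (\<kappa> j) (zs j) \<and> F (\<kappa> j) (zs j) \<le> C) sequentially"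
    by eventually_elim auto
  then show ?thesis by blast
qed

lemma ynorm_le: "ynorm m y \<le> (\<Sum>p\<in>{1..m}. \<bar>fst y p\<bar> + \<bar>snd y p\<bar>)"
proof -
  have "ynorm m y \<le> sqrt (\<Sum>p\<in>{1..m}. (\<bar>fst y p\<bar> + \<bar>snd y p\<bar>)\<^sup>2)"
    unfolding ynorm_def
  proof (rule real_sqrt_le_mono, rule sum_mono)
    fix p
    have "0 \<le> 2 * \<bar>fst y p\<bar> * \<bar>snd y p\<bar>" by simp
    then show "(fst y p)\<^sup>2 + (snd y p)\<^sup>2 \<le> (\<bar>fst y p\<bar> + \<bar>snd y p\<bar>)\<^sup>2"
      by (simp add: power2_sum)
  qed
  also have "\<dots> = L2_set (\<lambda>p. \<bar>fst y p\<bar> + \<bar>snd y p\<bar>) {1..m}" by (simp add: L2_set_def)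
  also have "\<dots> \<le> (\<Sum>p\<in>{1..m}. \<bar>\<bar>fst y p\<bar> + \<bar>snd y p\<bar>\<bar>)" by (rule L2_set_le_sum_abs)
  also have "\<dots> = (\<Sum>p\<in>{1..m}. \<bar>fst y p\<bar> + \<bar>snd y p\<bar>)" by simp
  finally show ?thesis .
qed

lemma sigma_nonneg:
  assumes "summable (\<lambda>k. ahat k p)" "\<forall>k. 0 \<le> ahat k p"
  shows "0 \<le> sigma ahat k p"
proof -
  have "summable (\<lambda>j. ahat (j + k) p)" using summable_ignore_initial_segment[OF assms(1)] .
  then have "summable (\<lambda>j. ahat (k + j) p)" by (simp add: add.commute)
  then show ?thesis unfolding sigma_def by (rule suminf_nonneg) (use assms(2) in auto)
qed

lemma sigma_lim:
  assumes "summable (\<lambda>k. ahat k p)"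
  shows "(\<lambda>k. sigma ahat k p) \<longlonglongrightarrow> 0"
proof -
  have "(\<lambda>n. \<Sum>k. ahat (k + n) p) \<longlonglongrightarrow> 0" using suminf_exist_split2[OF assms] .
  then show ?thesis unfolding sigma_def by (simp add: add.commute)
qed

lemma sigma_zero: "\<forall>k. ahat k p = 0 \<Longrightarrow> sigma ahat k p = 0"
  by (simp add: sigma_def)

lemma unb:
  fixes Y :: "nat \<Rightarrow> 'b set" and nf :: "'b \<Rightarrow> real"
  assumes "\<forall>k. \<exists>B. \<forall>y\<in>Y k. nf y \<le> B" "\<not> (\<exists>B. \<forall>k\<in>S. \<forall>y\<in>Y k. nf y \<le> B)"
  shows "\<exists>\<kappa> ys. strict_mono \<kappa> \<and> (\<forall>j. \<kappa> j \<in> S \<and> ys j \<in> Y (\<kappa> j) \<and> real j \<le> nf (ys j))"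
proof -
  obtain Bk where Bk: "\<forall>k. \<forall>y\<in>Y k. nf y \<le> Bk k" using assms(1) by metis
  have ex: "\<exists>ky. fst ky \<in> S \<and> fst ky > n \<and> snd ky \<in> Y (fst ky) \<and> real n \<le> nf (snd ky)" for n
  proof -
    define B where "B = max (real n) (Max (Bk ` {..n}))"
    from assms(2) obtain k y where ky: "k \<in> S" "y \<in> Y k" "\<not> nf y \<le> B" by blast
    have "k > n"
    proof (rule ccontr)
      assume "\<not> n < k"
      then have "Bk k \<le> Max (Bk ` {..n})" by (intro Max_ge) auto
      then have "nf y \<le> B" using Bk ky(2) unfolding B_def by fastforce
      then show False using ky(3) by simp
    qed
    moreover have "real n \<le> nf y" using ky(3) unfolding B_def by simp
    ultimately show ?thesis using ky by (intro exI[of _ "(k, y)"]) simp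
  qed
  define P where "P n = (SOME ky. fst ky \<in> S \<and> fst ky > n \<and> snd ky \<in> Y (fst ky) \<and> real n \<le> nf (snd ky))" for n
  have P: "fst (P n) \<in> S \<and> fst (P n) > n \<and> snd (P n) \<in> Y (fst (P n)) \<and> real n \<le> nf (snd (P n))" for n
    unfolding P_def by (rule someI_ex[OF ex])
  define nn where "nn j = ((\<lambda>n. fst (P n)) ^^ j) 0" for j
  have nnS: "nn (Suc j) = fst (P (nn j))" for j by (simp add: nn_def)
  have nnj: "j \<le> nn j" for j
  proof (induction j)
    case 0 then show ?case by simp
  next
    case (Suc j) then show ?case using nnS[of j] P[of "nn j"] by simp
  qed
  show ?thesis
  proof (intro exI[of _ "\<lambda>j. fst (P (nn j))"] exI[of _ "\<lambda>j. snd (P (nn j))"] conjI allI)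
    show "strict_mono (\<lambda>j. fst (P (nn j)))"
      unfolding strict_mono_Suc_iff using P nnS by metis
    fix j
    show "fst (P (nn j)) \<in> S" using P by blast
    show "snd (P (nn j)) \<in> Y (fst (P (nn j)))" using P by blast
    show "real j \<le> nf (snd (P (nn j)))" using P[of "nn j"] nnj[of j] by linarith
  qed
qed

lemma lim_either:
  fixes xn xo Z :: "nat \<Rightarrow> 'b::metric_space"
  assumes "xn \<longlonglongrightarrow> l" "xo \<longlonglongrightarrow> l" "\<forall>j. Z j = xn j \<or> Z j = xo j"
  shows "Z \<longlonglongrightarrow> l"
  unfolding lim_sequentially
proof (intro allI impI)
  fix e :: real assume "0 < e"
  then obtain J1 J2 where J1: "\<forall>j\<ge>J1. dist (xn j) l < e" and J2: "\<forall>j\<ge>J2. dist (xo j) l < e"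
    using assms(1,2) unfolding lim_sequentially by meson
  show "\<exists>J. \<forall>j\<ge>J. dist (Z j) l < e"
    by (rule exI[of _ "max J1 J2"]) (metis J1 J2 assms(3) max.bounded_iff)
qed

lemma null_bounded:
  fixes f :: "nat \<Rightarrow> 'b::real_normed_vector" and c :: "nat \<Rightarrow> real"
  assumes "eventually (\<lambda>j. norm (f j) \<le> B) sequentially" "c \<longlonglongrightarrow> 0"
  shows "(\<lambda>j. c j *\<^sub>R f j) \<longlonglongrightarrow> 0"
proof (rule Lim_null_comparison)
  show "eventually (\<lambda>j. norm (c j *\<^sub>R f j) \<le> \<bar>c j\<bar> * B) sequentially"
    using assms(1) by eventually_elim (simp add: mult_left_mono)
  have "(\<lambda>j. \<bar>c j\<bar>) \<longlonglongrightarrow> 0" using tendsto_rabs_zero[OF assms(2)] .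
  then show "(\<lambda>j. \<bar>c j\<bar> * B) \<longlonglongrightarrow> 0" using tendsto_mult_left_zero by blast
qed



lemma tends_inv_lin:
  fixes T :: "nat \<Rightarrow> real"
  assumes "eventually (\<lambda>j. real j - C \<le> T j) sequentially"
  shows "(\<lambda>j. 1 / T j) \<longlonglongrightarrow> 0"
proof -
  have "filterlim (\<lambda>j. - C + real j) at_top sequentially"
    by (rule filterlim_tendsto_add_at_top[OF tendsto_const filterlim_real_sequentially])
  then have "filterlim (\<lambda>j. real j - C) at_top sequentially" by simp
  then have "filterlim T at_top sequentially" using assms by (rule filterlim_at_top_mono)
  then have "(\<lambda>j. inverse (T j)) \<longlonglongrightarrow> 0" by (rule tendsto_inverse_0_at_top)
  then show ?thesis by (simp add: inverse_eq_divide)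
qed

lemma conv_ev_bounded:
  fixes f :: "nat \<Rightarrow> 'b::real_normed_vector"
  assumes "f \<longlonglongrightarrow> l"
  shows "eventually (\<lambda>j. norm (f j) \<le> norm l + 1) sequentially"
proof -
  have "eventually (\<lambda>j. dist (f j) l < 1) sequentially" using assms by (rule tendstoD) simp
  then show ?thesis
  proof eventually_elim
    case (elim j)
    have "norm (f j) \<le> norm l + norm (f j - l)" using norm_triangle_ineq[of l "f j - l"] by simp
    then show ?case using elim by (simp add: dist_norm)
  qed
qed

lemma fin_ev_bound:
  fixes Q :: "nat \<Rightarrow> 'i \<Rightarrow> real"
  assumes "finite P" "\<forall>p\<in>P. \<exists>M. eventually (\<lambda>j. Q j p \<le> M) sequentially"
  shows "\<exists>M. eventually (\<lambda>j. \<forall>p\<in>P. Q j p \<le> M) sequentially"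
proof -
  obtain Mf where Mf: "\<forall>p\<in>P. eventually (\<lambda>j. Q j p \<le> Mf p) sequentially"
    using bchoice[OF assms(2)] by blast
  have "eventually (\<lambda>j. \<forall>p\<in>P. Q j p \<le> Mf p) sequentially"
    using eventually_ball_finite[OF assms(1) Mf] .
  then have "eventually (\<lambda>j. \<forall>p\<in>P. Q j p \<le> (\<Sum>q\<in>P. \<bar>Mf q\<bar>)) sequentially"
  proof eventually_elim
    case (elim j)
    show ?case
    proof
      fix p assume p: "p \<in> P"
      have "Mf p \<le> \<bar>Mf p\<bar>" by simp
      also have "\<dots> \<le> (\<Sum>q\<in>P. \<bar>Mf q\<bar>)" by (rule member_le_sum[OF p]) (use assms(1) in auto)
      finally show "Q j p \<le> (\<Sum>q\<in>P. \<bar>Mf q\<bar>)" using elim p by force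
    qed
  qed
  then show ?thesis by blast
qed

lemma ev_bounded_range3:
  fixes f :: "nat \<Rightarrow> 'b::real_normed_vector"
  assumes "\<exists>B. eventually (\<lambda>j. norm (f j) \<le> B) sequentially"
  shows "bounded (range f)"
  using assms ev_bounded_range by blast

lemma bounded_pair_range:
  assumes "bounded (range f)" "bounded (range g)"
  shows "bounded (range (\<lambda>j. (f j, g j)))"
proof -
  have "range (\<lambda>j. (f j, g j)) \<subseteq> range f \<times> range g" by auto
  then show ?thesis using bounded_Times[OF assms] bounded_subset by blast
qed

lemma sum_split_m1:
  assumes "m1 \<le> (m::nat)"
  shows "(\<Sum>p\<in>{1..m}. F p) = (\<Sum>p\<in>{1..m1}. F p) + (\<Sum>p\<in>{m1<..m}. F p)"
proof -
  have "{1..m} = {1..m1} \<union> {m1<..m}" using assms by auto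
  moreover have "{1..m1} \<inter> {m1<..m} = {}" by auto
  ultimately show ?thesis by (simp add: sum.union_disjoint)
qed


theorem proposition4p5:
  fixes m m1 :: nat
    and phi :: "nat \<Rightarrow> real \<Rightarrow> real"
    and f :: "nat \<Rightarrow> 'a::euclidean_space \<Rightarrow> real"
    and g h :: "nat \<Rightarrow> nat \<Rightarrow> 'a \<Rightarrow> real"
    and ahat :: "nat \<Rightarrow> nat \<Rightarrow> real"
    and ell eps del :: "nat \<Rightarrow> real"
    and lam :: real
    and x :: "nat \<Rightarrow> 'a"
    and xx :: "nat \<Rightarrow> nat \<Rightarrow> 'a"
    and a b :: "nat \<Rightarrow> nat \<Rightarrow> nat \<Rightarrow> 'a"
    and ik :: "nat \<Rightarrow> nat"
  assumes m1_le: "m1 \<le> m"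
    and phi_convex: "\<forall>p\<in>{1..m1}. convex_on UNIV (phi p)"
    \<comment> \<open>Assumption 1\<close>
    and g_convex: "\<forall>k. \<forall>p\<in>{1..m}. convex_on UNIV (g k p)"
    and h_convex: "\<forall>k. \<forall>p\<in>{1..m}. convex_on UNIV (h k p)"
    and f_epi: "\<forall>p\<in>{1..m}. epi_conv (\<lambda>k z. ereal (dcf g h k p z)) (\<lambda>z. ereal (f p z))"
    and f_liminf: "\<forall>p\<in>{1..m}. \<forall>z.
        - \<infinity> < Liminf (nhds z \<times>\<^sub>F sequentially) (\<lambda>(z', k). ereal (dcf g h k p z'))"
    and f_limsup: "\<forall>p\<in>{1..m}. \<forall>z.
        Limsup (nhds z \<times>\<^sub>F sequentially) (\<lambda>(z', k). ereal (dcf g h k p z')) < \<infinity>"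
    and F_epi: "\<forall>p\<in>{1..m}. epi_conv (\<lambda>k z. Phi m1 phi p (dcf g h k p z))
                                     (\<lambda>z. Phi m1 phi p (f p z))"
    \<comment> \<open>Assumption 2\<close>
    and ahat_nonneg: "\<forall>k. \<forall>p\<in>{1..m}. 0 \<le> ahat k p"
    and ahat_ge: "\<forall>k. \<forall>p\<in>{m1<..m}.
        (SUP z\<in>{z. \<forall>q\<in>{m1<..m}. dcf g h k q z \<le> 0}.
            ereal (max 0 (dcf g h (Suc k) p z - dcf g h k p z))) \<le> ereal (ahat k p)"
    and ahat_summable: "\<forall>p\<in>{m1<..m}. summable (\<lambda>k. ahat k p)"
    and x0_feas: "\<forall>p\<in>{m1<..m}. dcf g h 0 p (x 0) \<le> - (\<Sum>k. ahat k p)"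
    and ahat_zero: "\<forall>k. \<forall>p\<in>{1..m1}. ahat k p = 0"
    \<comment> \<open>Assumption 3\<close>
    and ell_pos: "\<forall>k. 0 < ell k"
    and lipschitz_sub: "\<forall>k. \<forall>p\<in>{1..m}. \<forall>z z'.
        min (hausd (csubdiff (g k p) z) (csubdiff (g k p) z'))
            (hausd (csubdiff (h k p) z) (csubdiff (h k p) z')) \<le> ereal (ell k * norm (z - z'))"
    \<comment> \<open>Assumption 4\<close>
    and level_bounded: "\<forall>k. \<forall>c::real.
        bounded {z. (\<Sum>p\<in>{1..m}. Phi m1 phi p (dcf g h k p z)) \<le> ereal c}"
    \<comment> \<open>Assumption 5\<close>
    and CQ: "\<forall>xb\<in>(\<Inter>p\<in>{1..m}. domF m1 phi f p). \<forall>(y::nat \<Rightarrow> real) (v::nat \<Rightarrow> 'a).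
        (\<Sum>p\<in>{1..m}. y p *\<^sub>R v p) = 0 \<and>
        (\<forall>p\<in>{1..m}.
           (y p \<in> (\<Union>t\<in>Tset (dcf g h) p xb. ncone1 {s. Phi m1 phi p s \<noteq> \<infinity>} t) \<and>
            v p \<in> convex hull (dA g h p xb))
         \<or> v p \<in> dAinf g h p xb - {0})
        \<longrightarrow> (\<forall>p\<in>{1..m}. y p = 0)"
    \<comment> \<open>Method parameters\<close>
    and lam_pos: "0 < lam"
    and eps_pos: "\<forall>k. 0 < eps k" and eps_mono: "antimono eps" and eps_lim: "eps \<longlonglongrightarrow> 0"
    and del_pos: "\<forall>k. 0 < del k" and del_mono: "antimono del" and del_lim: "del \<longlonglongrightarrow> 0"
    and delell_mono: "antimono (\<lambda>k. del k / (lam + ell k))"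
    and delell_lim: "(\<lambda>k. del k / (lam + ell k)) \<longlonglongrightarrow> 0"
    \<comment> \<open>The iterates are generated by the method\<close>
    and inner_start: "\<forall>k. xx k 0 = x k"
    and sub_choice: "\<forall>k. \<forall>i\<le>ik k. \<forall>p\<in>{1..m}.
        a k i p \<in> csubdiff (h k p) (xx k i) \<and> b k i p \<in> csubdiff (g k p) (xx k i)"
    and inner_step: "\<forall>k. \<forall>i\<le>ik k.
        subsol m m1 phi g h ahat lam k (a k i) (b k i) (xx k i) (xx k (Suc i))"
    and stop_at: "\<forall>k. stoptest m m1 phi g h ahat lam eps del ell k (a k (ik k)) (b k (ik k))
                        (xx k (ik k)) (xx k (Suc (ik k)))"
    and stop_first: "\<forall>k. \<forall>i<ik k. \<not> stoptest m m1 phi g h ahat lam eps del ell k (a k i) (b k i)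
                        (xx k i) (xx k (Suc i))"
    and outer_step: "\<forall>k. x (Suc k) = xx k (ik k)"
    \<comment> \<open>Assumption 6\<close>
    and CQ_sub: "\<forall>k z' z'' (a' :: nat \<Rightarrow> 'a) (b' :: nat \<Rightarrow> 'a).
        (\<forall>p\<in>{1..m}. a' p \<in> csubdiff (h k p) z' \<and> b' p \<in> csubdiff (g k p) z') \<and>
        subsol m m1 phi g h ahat lam k a' b' z' z'' \<longrightarrow>
        (\<forall>y::nat \<Rightarrow> real.
           (\<forall>p\<in>{m1<..m}. y p \<in> ncone1 {..0} (fup g h ahat a' k p z' z'')) \<and>
           (\<exists>v::nat \<Rightarrow> 'a. (\<forall>p\<in>{m1<..m}. v p \<in> csubdiff (fup g h ahat a' k p z') z'') \<and>
               (\<Sum>p\<in>{m1<..m}. y p *\<^sub>R v p) = 0)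
           \<longrightarrow> (\<forall>p\<in>{m1<..m}. y p = 0))"
  shows
    "(\<forall>N xbar. infinite N \<and> conv_along N (\<lambda>k. x (Suc k)) xbar \<and>
        (\<forall>p\<in>I2 m m1 phi. dAinf g h p xbar = {0}) \<longrightarrow>
        (\<exists>B. \<forall>k\<in>N. \<forall>y\<in>Yset m m1 phi lam
              (\<lambda>p. fup g h ahat (a k (ik k)) k p (xx k (ik k)))
              (\<lambda>p. flo g h (b k (ik k)) k p (xx k (ik k)))
              (xx k (Suc (ik k))) (xx k (ik k)). ynorm m y \<le> B))
     \<and>
     (bounded (range x) \<and>
        (\<forall>z\<in>(\<Inter>p\<in>{1..m}. domF m1 phi f p). \<forall>p\<in>I2 m m1 phi. dAinf g h p z = {0}) \<longrightarrow>
        (\<exists>B. \<forall>k. \<forall>y\<in>Yset m m1 phi lam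
              (\<lambda>p. fup g h ahat (a k (ik k)) k p (xx k (ik k)))
              (\<lambda>p. flo g h (b k (ik k)) k p (xx k (ik k)))
              (xx k (Suc (ik k))) (xx k (ik k)). ynorm m y \<le> B))"
proof -
  define Y where "Y k = Yset m m1 phi lam (\<lambda>p. fup g h ahat (a k (ik k)) k p (xx k (ik k)))
     (\<lambda>p. flo g h (b k (ik k)) k p (xx k (ik k))) (xx k (Suc (ik k))) (xx k (ik k))" for k
  define xo where "xo k = xx k (ik k)" for k
  define xn where "xn k = xx k (Suc (ik k))" for k
  define Av where "Av k = a k (ik k)" for k
  define Bv where "Bv k = b k (ik k)" for k
  define fU where "fU k p = fup g h ahat (Av k) k p (xo k) (xn k)" for k p
  define fL where "fL k p = flo g h (Bv k) k p (xo k) (xn k)" for k p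
  define fv where "fv k p = dcf g h k p (xn k)" for k p
  have I2sub: "I2 m m1 phi \<subseteq> {1..m1}"
  proof
    fix p assume p: "p \<in> I2 m m1 phi"
    then have p1: "p \<in> {1..m}" and nm: "\<not> mono (Phi m1 phi p)" by (simp_all add: I2_def I1_def)
    have "p \<le> m1"
    proof (rule ccontr)
      assume "\<not> p \<le> m1"
      then show False using nm Phi_big_mono[of m1 p phi] by simp
    qed
    then show "p \<in> {1..m1}" using p1 by simp
  qed
  have notI2: "mono (Phi m1 phi p)" if "p \<in> {1..m}" "p \<notin> I2 m m1 phi" for p
    using that by (simp add: I2_def I1_def)
  have subA: "\<forall>p\<in>{1..m}. Av k p \<in> csubdiff (h k p) (xo k) \<and> Bv k p \<in> csubdiff (g k p) (xo k)" for k
    using sub_choice by (simp add: Av_def Bv_def xo_def)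
  have subs: "subsol m m1 phi g h ahat lam k (Av k) (Bv k) (xo k) (xn k)" for k
    using inner_step by (simp add: Av_def Bv_def xo_def xn_def)
  have stp: "stoptest m m1 phi g h ahat lam eps del ell k (Av k) (Bv k) (xo k) (xn k)" for k
    using stop_at by (simp add: Av_def Bv_def xo_def xn_def)
  have xo_x: "xo k = x (Suc k)" for k using outer_step by (simp add: xo_def)
  have fU_le0: "\<forall>p\<in>{m1<..m}. fU k p \<le> 0" for k
    using subs[of k] by (simp add: subsol_def fU_def)
  have fU_ge: "\<forall>p\<in>{1..m}. fv k p + sigma ahat k p \<le> fU k p" for k
    using subA[of k] fup_ge unfolding fU_def fv_def by blast
  have fU_le: "\<forall>p\<in>{1..m}. fU k p \<le> fv k p + sigma ahat k p + eps k" for k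
    using stp[of k] unfolding stoptest_def fU_def fv_def by blast
  have fL_le: "\<forall>p\<in>{1..m}. fL k p \<le> fv k p" for k
    using subA[of k] flo_le unfolding fL_def fv_def by blast
  have fL_ge: "\<forall>p\<in>I2 m m1 phi. fv k p - eps k \<le> fL k p" for k
    using stp[of k] unfolding stoptest_def fL_def fv_def by blast
  have dxn: "norm (xn k - xo k) \<le> del k / (lam + ell k)" for k
    using stp[of k] unfolding stoptest_def by blast
  have ell_dist: "ell k * norm (xn k - xo k) \<le> del k" for k
  proof -
    have "ell k * norm (xn k - xo k) \<le> ell k * (del k / (lam + ell k))"
      by (rule mult_left_mono[OF dxn]) (use ell_pos in \<open>simp add: less_imp_le\<close>)
    also have "\<dots> = del k * (ell k / (lam + ell k))" by simp
    also have "\<dots> \<le> del k * 1"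
    proof (rule mult_left_mono)
      have "0 < lam + ell k" using ell_pos lam_pos by (simp add: add_pos_pos)
      then show "ell k / (lam + ell k) \<le> 1" using lam_pos by (simp add: divide_le_eq_1)
      show "0 \<le> del k" using del_pos by (simp add: less_imp_le)
    qed
    finally show ?thesis by simp
  qed
  have sig0: "\<forall>p\<in>{1..m1}. sigma ahat k p = 0" for k
    using ahat_zero sigma_zero by blast
  have sig_nn: "\<forall>p\<in>{1..m}. 0 \<le> sigma ahat k p" for k
  proof
    fix p assume p: "p \<in> {1..m}"
    show "0 \<le> sigma ahat k p"
    proof (cases "p \<le> m1")
      case True then show ?thesis using sig0[of k] p by simp
    next
      case False
      then have "p \<in> {m1<..m}" using p by simp
      then show ?thesis using ahat_summable ahat_nonneg p sigma_nonneg by blast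
    qed
  qed
  have fv_le0: "\<forall>p\<in>{m1<..m}. fv k p \<le> 0" for k
  proof
    fix p assume p: "p \<in> {m1<..m}"
    then have "p \<in> {1..m}" by simp
    then show "fv k p \<le> 0" using fU_le0[of k] fU_ge[of k] sig_nn[of k] p by fastforce
  qed
  have Ymem: "y \<in> Y k \<Longrightarrow> (\<forall>p. p \<notin> {1..m} \<longrightarrow> fst y p = 0 \<and> snd y p = 0) \<and>
     (\<forall>p\<in>{1..m}. fst y p \<in> esubdiff1 (dec_up (Phi m1 phi p)) (fU k p) \<and>
                 snd y p \<in> esubdiff1 (dec_dn (Phi m1 phi p)) (fL k p)) \<and>
     (\<exists>u v. (\<forall>p\<in>{1..m}. u p \<in> csubdiff (fup g h ahat (Av k) k p (xo k)) (xn k) \<and>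
                         v p \<in> csupdiff (flo g h (Bv k) k p (xo k)) (xn k)) \<and>
        (\<Sum>p\<in>{1..m}. fst y p *\<^sub>R u p + snd y p *\<^sub>R v p) + lam *\<^sub>R (xn k - xo k) = 0)" for y k
    by (cases y) (simp add: Y_def Yset_def fU_def fL_def Av_def Bv_def xo_def xn_def)
  define PUV where "PUV k y u v \<longleftrightarrow> (\<forall>p\<in>{1..m}. u p \<in> csubdiff (fup g h ahat (Av k) k p (xo k)) (xn k) \<and>
                         v p \<in> csupdiff (flo g h (Bv k) k p (xo k)) (xn k)) \<and>
        (\<Sum>p\<in>{1..m}. fst y p *\<^sub>R u p + snd y p *\<^sub>R v p) + lam *\<^sub>R (xn k - xo k) = 0" for k y u v
  have "\<forall>ky. \<exists>uv. snd ky \<in> Y (fst ky) \<longrightarrow> PUV (fst ky) (snd ky) (fst uv) (snd uv)"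
    using Ymem unfolding PUV_def by fastforce
  then obtain UVf where UVf: "\<forall>ky. snd ky \<in> Y (fst ky) \<longrightarrow> PUV (fst ky) (snd ky) (fst (UVf ky)) (snd (UVf ky))"
    by (rule choice[THEN exE]) blast
  define U where "U k y = fst (UVf (k, y))" for k y
  define V where "V k y = snd (UVf (k, y))" for k y
  have UV: "y \<in> Y k \<Longrightarrow> PUV k y (U k y) (V k y)" for k y using UVf[rule_format, of "(k, y)"] by (simp add: U_def V_def)
  have Usub: "y \<in> Y k \<Longrightarrow> p \<in> {1..m} \<Longrightarrow> U k y p + Av k p \<in> csubdiff (g k p) (xn k)" for y k p
    using UV[of y k] csubdiff_fup unfolding PUV_def by blast
  have Vsub: "y \<in> Y k \<Longrightarrow> p \<in> {1..m} \<Longrightarrow> Bv k p - V k y p \<in> csubdiff (h k p) (xn k)" for y k p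
    using UV[of y k] csupdiff_flo unfolding PUV_def by blast
  have Yeq: "y \<in> Y k \<Longrightarrow> (\<Sum>p\<in>{1..m}. fst y p *\<^sub>R U k y p + snd y p *\<^sub>R V k y p) + lam *\<^sub>R (xn k - xo k) = 0" for y k
    using UV[of y k] unfolding PUV_def by blast
  have y1sub: "y \<in> Y k \<Longrightarrow> p \<in> {1..m} \<Longrightarrow> fst y p \<in> esubdiff1 (dec_up (Phi m1 phi p)) (fU k p)" for y k p
    using Ymem by blast
  have y2sub: "y \<in> Y k \<Longrightarrow> p \<in> {1..m} \<Longrightarrow> snd y p \<in> esubdiff1 (dec_dn (Phi m1 phi p)) (fL k p)" for y k p
    using Ymem by blast
  have y2zero: "y \<in> Y k \<Longrightarrow> p \<in> {1..m} \<Longrightarrow> p \<notin> I2 m m1 phi \<Longrightarrow> snd y p = 0" for y k p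
    using y2sub[of y k p] notI2[of p] dec_dn_mono esub_zero by metis
  have y1nn: "y \<in> Y k \<Longrightarrow> p \<in> {1..m} \<Longrightarrow> p \<notin> I2 m m1 phi \<Longrightarrow> 0 \<le> fst y p" for y k p
    using y1sub[of y k p] notI2[of p] dec_up_mono esub_mono_nonneg by metis
  have y1big: "y \<in> Y k \<Longrightarrow> p \<in> {m1<..m} \<Longrightarrow> 0 < fst y p \<Longrightarrow> fU k p = 0" for y k p
    using y1sub[of y k p] esub_ind[of m1 p "fst y p" phi "fU k p"] by simp
  have shU: "\<exists>w \<zeta>. (\<zeta> = xn k \<or> \<zeta> = xo k) \<and> w \<in> dcsub g h k p \<zeta> \<and> norm (w - U k y p) \<le> del k"
    if "y \<in> Y k" "p \<in> {1..m}" for y k p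
  proof -
    have "\<exists>w \<zeta>. (\<zeta> = xn k \<or> \<zeta> = xo k) \<and> w \<in> dcsub g h k p \<zeta> \<and>
        norm (w - ((U k y p + Av k p) - Av k p)) \<le> ell k * norm (xn k - xo k)"
      unfolding dcsub_def
      by (rule shift[OF Usub[OF that] _ _ Vsub[OF that] lipschitz_sub[rule_format, OF that(2)]])
         (use subA[of k] that(2) in auto)
    then show ?thesis using ell_dist[of k] by force
  qed
  have shV: "\<exists>w \<zeta>. (\<zeta> = xn k \<or> \<zeta> = xo k) \<and> w \<in> dcsub g h k p \<zeta> \<and> norm (w - V k y p) \<le> del k"
    if "y \<in> Y k" "p \<in> {1..m}" for y k p
  proof -
    have "\<exists>w \<zeta>. (\<zeta> = xo k \<or> \<zeta> = xn k) \<and> w \<in> dcsub g h k p \<zeta> \<and>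
        norm (w - (Bv k p - (Bv k p - V k y p))) \<le> ell k * norm (xo k - xn k)"
      unfolding dcsub_def
      by (rule shift[OF _ Vsub[OF that] Usub[OF that] _ lipschitz_sub[rule_format, OF that(2)]])
         (use subA[of k] that(2) in auto)
    then show ?thesis using ell_dist[of k] by (force simp: norm_minus_commute)
  qed
  have "\<forall>y k p. \<exists>wz. y \<in> Y k \<and> p \<in> {1..m} \<longrightarrow>
      (snd wz = xn k \<or> snd wz = xo k) \<and> fst wz \<in> dcsub g h k p (snd wz) \<and> norm (fst wz - U k y p) \<le> del k"
    using shU by (metis fst_conv snd_conv)
  then obtain Fu where Fu: "\<forall>y k p. y \<in> Y k \<and> p \<in> {1..m} \<longrightarrow>
      (snd (Fu y k p) = xn k \<or> snd (Fu y k p) = xo k) \<and> fst (Fu y k p) \<in> dcsub g h k p (snd (Fu y k p)) \<and> norm (fst (Fu y k p) - U k y p) \<le> del k"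
    by metis
  define Ut where "Ut k y p = fst (Fu y k p)" for k y p
  define Zu where "Zu k y p = snd (Fu y k p)" for k y p
  have UtZu: "\<And>y k p. y \<in> Y k \<Longrightarrow> p \<in> {1..m} \<Longrightarrow>
      (Zu k y p = xn k \<or> Zu k y p = xo k) \<and> Ut k y p \<in> dcsub g h k p (Zu k y p) \<and> norm (Ut k y p - U k y p) \<le> del k"
    unfolding Ut_def Zu_def using Fu by blast
  have "\<forall>y k p. \<exists>wz. y \<in> Y k \<and> p \<in> {1..m} \<longrightarrow>
      (snd wz = xn k \<or> snd wz = xo k) \<and> fst wz \<in> dcsub g h k p (snd wz) \<and> norm (fst wz - V k y p) \<le> del k"
    using shV by (metis fst_conv snd_conv)
  then obtain Fv where Fv: "\<forall>y k p. y \<in> Y k \<and> p \<in> {1..m} \<longrightarrow>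
      (snd (Fv y k p) = xn k \<or> snd (Fv y k p) = xo k) \<and> fst (Fv y k p) \<in> dcsub g h k p (snd (Fv y k p)) \<and> norm (fst (Fv y k p) - V k y p) \<le> del k"
    by metis
  define Vt where "Vt k y p = fst (Fv y k p)" for k y p
  define Zv where "Zv k y p = snd (Fv y k p)" for k y p
  have VtZv: "\<And>y k p. y \<in> Y k \<Longrightarrow> p \<in> {1..m} \<Longrightarrow>
      (Zv k y p = xn k \<or> Zv k y p = xo k) \<and> Vt k y p \<in> dcsub g h k p (Zv k y p) \<and> norm (Vt k y p - V k y p) \<le> del k"
    unfolding Vt_def Zv_def using Fv by blast
  have PK: "\<exists>Bd. \<forall>y\<in>Y k. ynorm m y \<le> Bd" for k
  proof (rule ccontr)
    assume nb: "\<not> (\<exists>Bd. \<forall>y\<in>Y k. ynorm m y \<le> Bd)"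
    have "\<forall>j. \<exists>y. y \<in> Y k \<and> real j \<le> ynorm m y"
    proof
      fix j :: nat
      from nb obtain y where "y \<in> Y k" "\<not> ynorm m y \<le> real j" by blast
      then show "\<exists>y. y \<in> Y k \<and> real j \<le> ynorm m y" by (intro exI[of _ y]) simp
    qed
    then obtain ys where ys: "\<And>j. ys j \<in> Y k" "\<And>j. real j \<le> ynorm m (ys j)" by metis
    have "\<forall>p\<in>{1..m1}. \<exists>M. eventually (\<lambda>j. \<bar>fst (ys j) p\<bar> + \<bar>snd (ys j) p\<bar> \<le> M) sequentially"
    proof
      fix p assume p: "p \<in> {1..m1}"
      obtain M where M: "M \<ge> 0" "\<forall>t s. \<bar>t\<bar> \<le> \<bar>fU k p\<bar> + \<bar>fL k p\<bar> \<longrightarrow>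
         (s \<in> esubdiff1 (dec_up (Phi m1 phi p)) t \<or> s \<in> esubdiff1 (dec_dn (Phi m1 phi p)) t) \<longrightarrow> \<bar>s\<bar> \<le> M"
        using SUBB[of p m1 phi "\<bar>fU k p\<bar> + \<bar>fL k p\<bar>"] p phi_convex by auto
      have pm: "p \<in> {1..m}" using p m1_le by simp
      have H: "\<forall>j. \<bar>fst (ys j) p\<bar> + \<bar>snd (ys j) p\<bar> \<le> M + M"
      proof
        fix j
        have "\<bar>fst (ys j) p\<bar> \<le> M" by (rule M(2)[rule_format]) (use y1sub[OF ys(1) pm] in auto)
        moreover have "\<bar>snd (ys j) p\<bar> \<le> M" by (rule M(2)[rule_format]) (use y2sub[OF ys(1) pm] in auto)
        ultimately show "\<bar>fst (ys j) p\<bar> + \<bar>snd (ys j) p\<bar> \<le> M + M" by linarith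
      qed
      show "\<exists>M. eventually (\<lambda>j. \<bar>fst (ys j) p\<bar> + \<bar>snd (ys j) p\<bar> \<le> M) sequentially"
        by (intro exI[of _ "M + M"] always_eventually) (rule H)
    qed
    from fin_ev_bound[OF _ this] obtain M where
      M: "eventually (\<lambda>j. \<forall>p\<in>{1..m1}. \<bar>fst (ys j) p\<bar> + \<bar>snd (ys j) p\<bar> \<le> M) sequentially" by auto
    define \<Lambda> where "\<Lambda> j = (\<Sum>p\<in>{m1<..m}. fst (ys j) p)" for j
    have big_nn: "0 \<le> fst (ys j) p" "snd (ys j) p = 0" if "p \<in> {m1<..m}" for j p
    proof -
      have pp: "p \<in> {1..m}" "p \<notin> I2 m m1 phi" using that I2sub by auto
      show "0 \<le> fst (ys j) p" by (rule y1nn[OF ys(1) pp])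
      show "snd (ys j) p = 0" by (rule y2zero[OF ys(1) pp])
    qed
    have Lnn: "0 \<le> \<Lambda> j" for j unfolding \<Lambda>_def by (rule sum_nonneg) (use big_nn in simp)
    have y1le: "fst (ys j) p \<le> \<Lambda> j" if "p \<in> {m1<..m}" for j p
      unfolding \<Lambda>_def using big_nn that by (intro member_le_sum) auto
    have Lbig: "eventually (\<lambda>j. real j - real m1 * M \<le> \<Lambda> j) sequentially"
      using M
    proof eventually_elim
      case (elim j)
      have "real j \<le> ynorm m (ys j)" using ys(2) .
      also have "\<dots> \<le> (\<Sum>p\<in>{1..m}. \<bar>fst (ys j) p\<bar> + \<bar>snd (ys j) p\<bar>)" by (rule ynorm_le)
      also have "\<dots> = (\<Sum>p\<in>{1..m1}. \<bar>fst (ys j) p\<bar> + \<bar>snd (ys j) p\<bar>) + (\<Sum>p\<in>{m1<..m}. \<bar>fst (ys j) p\<bar> + \<bar>snd (ys j) p\<bar>)"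
        by (rule sum_split_m1[OF m1_le])
      also have "(\<Sum>p\<in>{m1<..m}. \<bar>fst (ys j) p\<bar> + \<bar>snd (ys j) p\<bar>) = \<Lambda> j"
        unfolding \<Lambda>_def using big_nn by (intro sum.cong) auto
      also have "(\<Sum>p\<in>{1..m1}. \<bar>fst (ys j) p\<bar> + \<bar>snd (ys j) p\<bar>) \<le> (\<Sum>p\<in>{1..m1}. M)"
        using elim by (intro sum_mono) auto
      finally show ?case by simp
    qed
    have invL: "(\<lambda>j. 1 / \<Lambda> j) \<longlonglongrightarrow> 0" using tends_inv_lin[OF Lbig] .
    have Lpos: "eventually (\<lambda>j. 0 < \<Lambda> j) sequentially"
    proof -
      have "eventually (\<lambda>j. real m1 * M + 1 \<le> real j) sequentially"
        using filterlim_real_sequentially unfolding filterlim_at_top by blast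
      then show ?thesis using Lbig by eventually_elim simp
    qed
    have Ub: "\<exists>R. \<forall>j. norm (U k (ys j) p) \<le> R" if p: "p \<in> {1..m}" for p
    proof -
      obtain R where R: "\<forall>v\<in>csubdiff (g k p) (xn k). norm v \<le> R"
        using bounded_csubdiff[of "g k p" "xn k"] g_convex p by blast
      have "norm (U k (ys j) p) \<le> R + norm (Av k p)" for j
      proof -
        have "norm (U k (ys j) p) = norm ((U k (ys j) p + Av k p) - Av k p)" by simp
        also have "\<dots> \<le> norm (U k (ys j) p + Av k p) + norm (Av k p)" by (rule norm_triangle_ineq4)
        also have "\<dots> \<le> R + norm (Av k p)" using R Usub[OF ys(1) p] by simp
        finally show ?thesis .
      qed
      then show ?thesis by blast
    qed
    have Vb: "\<exists>R. \<forall>j. norm (V k (ys j) p) \<le> R" if p: "p \<in> {1..m}" for p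
    proof -
      obtain R where R: "\<forall>v\<in>csubdiff (h k p) (xn k). norm v \<le> R"
        using bounded_csubdiff[of "h k p" "xn k"] h_convex p by blast
      have "norm (V k (ys j) p) \<le> R + norm (Bv k p)" for j
      proof -
        have "norm (V k (ys j) p) = norm (Bv k p - (Bv k p - V k (ys j) p))" by simp
        also have "\<dots> \<le> norm (Bv k p) + norm (Bv k p - V k (ys j) p)" by (rule norm_triangle_ineq4)
        also have "\<dots> \<le> R + norm (Bv k p)" using R Vsub[OF ys(1) p] by simp
        finally show ?thesis .
      qed
      then show ?thesis by blast
    qed
    define Rt where "Rt j = (\<Sum>p\<in>{1..m1}. fst (ys j) p *\<^sub>R U k (ys j) p + snd (ys j) p *\<^sub>R V k (ys j) p) + lam *\<^sub>R (xn k - xo k)" for j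
    have Rtb: "\<exists>Bd. eventually (\<lambda>j. norm (Rt j) \<le> Bd) sequentially"
    proof -
      have "\<forall>p\<in>{1..m1}. \<exists>Bd. eventually (\<lambda>j. norm (fst (ys j) p *\<^sub>R U k (ys j) p + snd (ys j) p *\<^sub>R V k (ys j) p) \<le> Bd) sequentially"
      proof
        fix p assume p: "p \<in> {1..m1}"
        then have pm: "p \<in> {1..m}" using m1_le by simp
        obtain R1 where R1: "\<forall>j. norm (U k (ys j) p) \<le> R1" using Ub[OF pm] by blast
        obtain R2 where R2: "\<forall>j. norm (V k (ys j) p) \<le> R2" using Vb[OF pm] by blast
        have "eventually (\<lambda>j. norm (fst (ys j) p *\<^sub>R U k (ys j) p + snd (ys j) p *\<^sub>R V k (ys j) p) \<le> M * (\<bar>R1\<bar> + \<bar>R2\<bar>)) sequentially"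
          using M
        proof eventually_elim
          case (elim j)
          have a1: "\<bar>fst (ys j) p\<bar> \<le> M" "\<bar>snd (ys j) p\<bar> \<le> M" using elim p by force+
          have "norm (fst (ys j) p *\<^sub>R U k (ys j) p + snd (ys j) p *\<^sub>R V k (ys j) p)
              \<le> \<bar>fst (ys j) p\<bar> * norm (U k (ys j) p) + \<bar>snd (ys j) p\<bar> * norm (V k (ys j) p)"
            using norm_triangle_ineq[of "fst (ys j) p *\<^sub>R U k (ys j) p" "snd (ys j) p *\<^sub>R V k (ys j) p"] by simp
          also have "\<dots> \<le> \<bar>fst (ys j) p\<bar> * \<bar>R1\<bar> + \<bar>snd (ys j) p\<bar> * \<bar>R2\<bar>"
            using R1 R2 by (intro add_mono mult_left_mono) (auto intro: order_trans[OF _ abs_ge_self])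
          also have "\<dots> \<le> M * \<bar>R1\<bar> + M * \<bar>R2\<bar>"
            using a1 by (intro add_mono mult_right_mono) auto
          finally show ?case by (simp add: distrib_left)
        qed
        then show "\<exists>Bd. eventually (\<lambda>j. norm (fst (ys j) p *\<^sub>R U k (ys j) p + snd (ys j) p *\<^sub>R V k (ys j) p) \<le> Bd) sequentially" by blast
      qed
      from fin_ev_bound[OF _ this] obtain Bd where Bd:
        "eventually (\<lambda>j. \<forall>p\<in>{1..m1}. norm (fst (ys j) p *\<^sub>R U k (ys j) p + snd (ys j) p *\<^sub>R V k (ys j) p) \<le> Bd) sequentially"
        by auto
      have "eventually (\<lambda>j. norm (Rt j) \<le> real m1 * Bd + norm (lam *\<^sub>R (xn k - xo k))) sequentially"
        using Bd
      proof eventually_elim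
        case (elim j)
        have "norm (Rt j) \<le> norm (\<Sum>p\<in>{1..m1}. fst (ys j) p *\<^sub>R U k (ys j) p + snd (ys j) p *\<^sub>R V k (ys j) p) + norm (lam *\<^sub>R (xn k - xo k))"
          unfolding Rt_def by (rule norm_triangle_ineq)
        also have "norm (\<Sum>p\<in>{1..m1}. fst (ys j) p *\<^sub>R U k (ys j) p + snd (ys j) p *\<^sub>R V k (ys j) p)
            \<le> (\<Sum>p\<in>{1..m1}. norm (fst (ys j) p *\<^sub>R U k (ys j) p + snd (ys j) p *\<^sub>R V k (ys j) p))" by (rule norm_sum)
        also have "\<dots> \<le> (\<Sum>p\<in>{1..m1}. Bd)" using elim by (intro sum_mono) auto
        finally show ?case by simp
      qed
      then show ?thesis by blast
    qed
    have eqsplit: "(\<Sum>p\<in>{m1<..m}. fst (ys j) p *\<^sub>R U k (ys j) p) = - Rt j" for j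
    proof -
      have "(\<Sum>p\<in>{1..m}. fst (ys j) p *\<^sub>R U k (ys j) p + snd (ys j) p *\<^sub>R V k (ys j) p) + lam *\<^sub>R (xn k - xo k) = 0"
        using Yeq[OF ys(1)] .
      then have "(\<Sum>p\<in>{1..m1}. fst (ys j) p *\<^sub>R U k (ys j) p + snd (ys j) p *\<^sub>R V k (ys j) p)
         + (\<Sum>p\<in>{m1<..m}. fst (ys j) p *\<^sub>R U k (ys j) p + snd (ys j) p *\<^sub>R V k (ys j) p) + lam *\<^sub>R (xn k - xo k) = 0"
        by (simp only: sum_split_m1[OF m1_le])
      moreover have "(\<Sum>p\<in>{m1<..m}. fst (ys j) p *\<^sub>R U k (ys j) p + snd (ys j) p *\<^sub>R V k (ys j) p)
          = (\<Sum>p\<in>{m1<..m}. fst (ys j) p *\<^sub>R U k (ys j) p)"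
        using big_nn by (intro sum.cong) auto
      ultimately show ?thesis unfolding Rt_def by (simp add: algebra_simps eq_neg_iff_add_eq_0)
    qed
    define Sq where "Sq j p = (fst (ys j) p / \<Lambda> j, U k (ys j) p)" for j p
    have "\<forall>p\<in>{m1<..m}. bounded (range (\<lambda>j. Sq j p))"
    proof
      fix p assume p: "p \<in> {m1<..m}"
      then have pm: "p \<in> {1..m}" by simp
      have "eventually (\<lambda>j. norm (fst (ys j) p / \<Lambda> j) \<le> 1) sequentially"
        using Lpos
      proof eventually_elim
        case (elim j)
        then show ?case using y1le[OF p, of j] big_nn[OF p, of j] by (simp add: divide_le_eq_1)
      qed
      then have b1: "bounded (range (\<lambda>j. fst (ys j) p / \<Lambda> j))" by (rule ev_bounded_range)
      obtain R1 where R1: "\<forall>j. norm (U k (ys j) p) \<le> R1" using Ub[OF pm] by blast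
      have b2: "bounded (range (\<lambda>j. U k (ys j) p))"
        by (rule ev_bounded_range[of _ R1]) (use R1 in simp)
      show "bounded (range (\<lambda>j. Sq j p))" unfolding Sq_def by (rule bounded_pair_range[OF b1 b2])
    qed
    from finite_subseq_conv[OF _ this] obtain r L where rL: "strict_mono r"
      "\<forall>p\<in>{m1<..m}. (\<lambda>j. Sq (r j) p) \<longlonglongrightarrow> L p" by auto
    define \<eta> where "\<eta> p = fst (L p)" for p
    define ub where "ub p = snd (L p)" for p
    have c\<eta>: "(\<lambda>j. fst (ys (r j)) p / \<Lambda> (r j)) \<longlonglongrightarrow> \<eta> p" if "p \<in> {m1<..m}" for p
      using tendsto_fst[OF rL(2)[rule_format, OF that]] by (simp add: Sq_def \<eta>_def)
    have cub: "(\<lambda>j. U k (ys (r j)) p) \<longlonglongrightarrow> ub p" if "p \<in> {m1<..m}" for p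
      using tendsto_snd[OF rL(2)[rule_format, OF that]] by (simp add: Sq_def ub_def)
    have Lposr: "eventually (\<lambda>j. 0 < \<Lambda> (r j)) sequentially"
      using filterlim_iff[THEN iffD1, OF filterlim_subseq[OF rL(1)], rule_format, OF Lpos] .
    have ubsub: "ub p \<in> csubdiff (fup g h ahat (Av k) k p (xo k)) (xn k)" if p: "p \<in> {m1<..m}" for p
    proof (rule closed_sequentially[OF closed_csubdiff _ cub[OF p]])
      fix j show "U k (ys (r j)) p \<in> csubdiff (fup g h ahat (Av k) k p (xo k)) (xn k)"
        using UV[OF ys(1)] p unfolding PUV_def by auto
    qed
    have \<eta>nn: "0 \<le> \<eta> p" if p: "p \<in> {m1<..m}" for p
    proof (rule tendsto_lowerbound[OF c\<eta>[OF p]])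
      show "eventually (\<lambda>j. 0 \<le> fst (ys (r j)) p / \<Lambda> (r j)) sequentially"
        using Lposr by eventually_elim (use big_nn[OF p] in simp)
    qed simp
    have sum1: "(\<Sum>p\<in>{m1<..m}. \<eta> p) = 1"
    proof -
      have "(\<lambda>j. \<Sum>p\<in>{m1<..m}. fst (ys (r j)) p / \<Lambda> (r j)) \<longlonglongrightarrow> (\<Sum>p\<in>{m1<..m}. \<eta> p)"
        by (rule tendsto_sum) (use c\<eta> in simp)
      moreover have "eventually (\<lambda>j. (\<Sum>p\<in>{m1<..m}. fst (ys (r j)) p / \<Lambda> (r j)) = 1) sequentially"
        using Lposr by eventually_elim (simp add: \<Lambda>_def sum_divide_distrib[symmetric])
      then have "(\<lambda>j. \<Sum>p\<in>{m1<..m}. fst (ys (r j)) p / \<Lambda> (r j)) \<longlonglongrightarrow> 1"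
        by (rule tendsto_eventually)
      ultimately show ?thesis using LIMSEQ_unique by blast
    qed
    have sum0: "(\<Sum>p\<in>{m1<..m}. \<eta> p *\<^sub>R ub p) = 0"
    proof -
      have "(\<lambda>j. \<Sum>p\<in>{m1<..m}. (fst (ys (r j)) p / \<Lambda> (r j)) *\<^sub>R U k (ys (r j)) p) \<longlonglongrightarrow> (\<Sum>p\<in>{m1<..m}. \<eta> p *\<^sub>R ub p)"
        by (rule tendsto_sum) (use c\<eta> cub in \<open>simp add: tendsto_scaleR\<close>)
      moreover have "(\<lambda>j. \<Sum>p\<in>{m1<..m}. (fst (ys (r j)) p / \<Lambda> (r j)) *\<^sub>R U k (ys (r j)) p) \<longlonglongrightarrow> 0"
      proof -
        have e: "(\<Sum>p\<in>{m1<..m}. (fst (ys (r j)) p / \<Lambda> (r j)) *\<^sub>R U k (ys (r j)) p) = (1 / \<Lambda> (r j)) *\<^sub>R (- Rt (r j))" for j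
          using eqsplit[of "r j", symmetric] by (simp add: scaleR_sum_right divide_inverse mult.commute)
        obtain Bd where Bd: "eventually (\<lambda>j. norm (Rt j) \<le> Bd) sequentially" using Rtb by blast
        have Bdr: "eventually (\<lambda>j. norm (- Rt (r j)) \<le> Bd) sequentially"
          using filterlim_iff[THEN iffD1, OF filterlim_subseq[OF rL(1)], rule_format, OF Bd] by simp
        have "(\<lambda>j. 1 / \<Lambda> (r j)) \<longlonglongrightarrow> 0" using LIMSEQ_subseq_LIMSEQ[OF invL rL(1)] by (simp add: o_def)
        then show ?thesis unfolding e by (rule null_bounded[OF Bdr])
      qed
      ultimately show ?thesis using LIMSEQ_unique by blast
    qed
    have ncone: "\<forall>p\<in>{m1<..m}. \<eta> p \<in> ncone1 {..0} (fup g h ahat (Av k) k p (xo k) (xn k))"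
    proof
      fix p assume p: "p \<in> {m1<..m}"
      have le0: "fU k p \<le> 0" using fU_le0[of k] p by blast
      have "\<eta> p * (z - fU k p) \<le> 0" if z: "z \<le> 0" for z
      proof (cases "\<eta> p = 0")
        case True then show ?thesis by simp
      next
        case False
        then have "0 < \<eta> p" using \<eta>nn[OF p] by simp
        then have "eventually (\<lambda>j. 0 < fst (ys (r j)) p / \<Lambda> (r j)) sequentially"
          using order_tendstoD(1)[OF c\<eta>[OF p]] by blast
        then have "eventually (\<lambda>j. 0 < fst (ys (r j)) p) sequentially"
          using Lposr by eventually_elim (simp add: zero_less_divide_iff)
        then obtain N where "\<forall>j\<ge>N. 0 < fst (ys (r j)) p" by (auto simp: eventually_sequentially)
        then have "0 < fst (ys (r N)) p" by simp
        then show ?thesis using y1big[OF ys(1) p] \<open>0 < \<eta> p\<close> z by (simp add: mult_nonneg_nonpos)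
      qed
      then show "\<eta> p \<in> ncone1 {..0} (fup g h ahat (Av k) k p (xo k) (xn k))"
        using le0 unfolding ncone1_def fU_def by auto
    qed
    have cq0: "(\<forall>p\<in>{1..m}. Av k p \<in> csubdiff (h k p) (xo k) \<and> Bv k p \<in> csubdiff (g k p) (xo k)) \<and>
        subsol m m1 phi g h ahat lam k (Av k) (Bv k) (xo k) (xn k) \<longrightarrow>
        (\<forall>y::nat \<Rightarrow> real.
           (\<forall>p\<in>{m1<..m}. y p \<in> ncone1 {..0} (fup g h ahat (Av k) k p (xo k) (xn k))) \<and>
           (\<exists>v::nat \<Rightarrow> 'a. (\<forall>p\<in>{m1<..m}. v p \<in> csubdiff (fup g h ahat (Av k) k p (xo k)) (xn k)) \<and>
               (\<Sum>p\<in>{m1<..m}. y p *\<^sub>R v p) = 0)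
           \<longrightarrow> (\<forall>p\<in>{m1<..m}. y p = 0))"
      using spec[OF spec[OF spec[OF spec[OF spec[OF CQ_sub, of k], of "xo k"], of "xn k"], of "Av k"], of "Bv k"] .
    note cq1 = mp[OF cq0 conjI[OF subA[of k] subs[of k]]]
    have "\<forall>p\<in>{m1<..m}. \<eta> p = 0"
    proof (rule mp[OF spec[OF cq1, of \<eta>]], intro conjI exI)
      show "\<forall>p\<in>{m1<..m}. \<eta> p \<in> ncone1 {..0} (fup g h ahat (Av k) k p (xo k) (xn k))" by (rule ncone)
      show "\<forall>p\<in>{m1<..m}. ub p \<in> csubdiff (fup g h ahat (Av k) k p (xo k)) (xn k)" using ubsub by blast
      show "(\<Sum>p\<in>{m1<..m}. \<eta> p *\<^sub>R ub p) = 0" by (rule sum0)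
    qed
    then show False using sum1 by simp
  qed
  define W where "W k y p = fst y p *\<^sub>R U k y p + snd y p *\<^sub>R V k y p" for k y p
  define Lam where "Lam y = (\<Sum>p\<in>{m1<..m}. fst y p)" for y :: "(nat \<Rightarrow> real) \<times> (nat \<Rightarrow> real)"
  define tau where "tau k y = 1 + Lam y + (\<Sum>p\<in>{1..m}. norm (W k y p))" for k y
  define Qv where "Qv k y p = (((1 / tau k y) *\<^sub>R W k y p, (1 / (1 + norm (Ut k y p))) *\<^sub>R Ut k y p),
        ((1 / (1 + norm (Vt k y p))) *\<^sub>R Vt k y p, (1 / (1 + norm (Ut k y p)), 1 / (1 + norm (Vt k y p)))),
        (fst y p / tau k y, fv k p))" for k y p
  define HYP where "HYP \<kappa> ys xbar \<longleftrightarrow> strict_mono \<kappa> \<and> (\<lambda>j. x (Suc (\<kappa> j))) \<longlonglongrightarrow> xbar \<and>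
      (\<forall>j. ys j \<in> Y (\<kappa> j) \<and> real j \<le> ynorm m (ys j))" for \<kappa> :: "nat \<Rightarrow> nat" and ys xbar
  have bigp: "0 \<le> fst y p" "snd y p = 0" if "y \<in> Y k" "p \<in> {m1<..m}" for y k p
  proof -
    have pp: "p \<in> {1..m}" "p \<notin> I2 m m1 phi" using that(2) I2sub by auto
    show "0 \<le> fst y p" by (rule y1nn[OF that(1) pp])
    show "snd y p = 0" by (rule y2zero[OF that(1) pp])
  qed
  have Lam_nn: "0 \<le> Lam y" if "y \<in> Y k" for y k
    unfolding Lam_def by (rule sum_nonneg) (use bigp[OF that] in simp)
  have tau_ge: "1 + Lam y \<le> tau k y" for k y
    unfolding tau_def by (simp add: sum_nonneg)
  have tau_ge1: "1 \<le> tau k y" if "y \<in> Y k" for y k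
    using tau_ge[of y k] Lam_nn[OF that] by simp
  have W_le: "norm (W k y p) \<le> tau k y" if "y \<in> Y k" "p \<in> {1..m}" for y k p
  proof -
    have "norm (W k y p) \<le> (\<Sum>q\<in>{1..m}. norm (W k y q))"
      by (rule member_le_sum[OF that(2)]) auto
    then show ?thesis unfolding tau_def using Lam_nn[OF that(1)] by simp
  qed
  have y1_le: "fst y p \<le> tau k y" if "y \<in> Y k" "p \<in> {m1<..m}" for y k p
  proof -
    have "fst y p \<le> Lam y" unfolding Lam_def
      by (rule member_le_sum[OF that(2)]) (use bigp[OF that(1)] in auto)
    then show ?thesis using tau_ge[of y k] by simp
  qed
  have Gxo: "(\<lambda>j. xo (\<kappa> j)) \<longlonglongrightarrow> xbar" if "HYP \<kappa> ys xbar" for \<kappa> ys xbar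
    using that unfolding HYP_def by (simp add: xo_x)
  have Gdiff: "(\<lambda>j. xn (\<kappa> j) - xo (\<kappa> j)) \<longlonglongrightarrow> 0" if "HYP \<kappa> ys xbar" for \<kappa> ys xbar
  proof (rule Lim_null_comparison)
    show "eventually (\<lambda>j. norm (xn (\<kappa> j) - xo (\<kappa> j)) \<le> del (\<kappa> j) / (lam + ell (\<kappa> j))) sequentially"
      using dxn by simp
    have "strict_mono \<kappa>" using that unfolding HYP_def by blast
    from LIMSEQ_subseq_LIMSEQ[OF delell_lim this]
    show "(\<lambda>j. del (\<kappa> j) / (lam + ell (\<kappa> j))) \<longlonglongrightarrow> 0" by (simp add: o_def)
  qed
  have Gxn: "(\<lambda>j. xn (\<kappa> j)) \<longlonglongrightarrow> xbar" if "HYP \<kappa> ys xbar" for \<kappa> ys xbar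
  proof -
    have "(\<lambda>j. xo (\<kappa> j) + (xn (\<kappa> j) - xo (\<kappa> j))) \<longlonglongrightarrow> xbar + 0"
      by (rule tendsto_add[OF Gxo[OF that] Gdiff[OF that]])
    then show ?thesis by simp
  qed
  have Gfv: "\<exists>c C. eventually (\<lambda>j. c \<le> fv (\<kappa> j) p \<and> fv (\<kappa> j) p \<le> C) sequentially"
    if "HYP \<kappa> ys xbar" "p \<in> {1..m}" for \<kappa> ys xbar p
  proof -
    have sm: "strict_mono \<kappa>" using that unfolding HYP_def by blast
    show ?thesis
      using locb[of xbar "\<lambda>k z. dcf g h k p z", OF f_liminf[rule_format, OF that(2)]
           f_limsup[rule_format, OF that(2)] Gxn[OF that(1)] sm]
      by (simp add: fv_def)
  qed
  have Gsmall: "\<exists>M. eventually (\<lambda>j. \<forall>p\<in>{1..m1}. \<bar>fst (ys j) p\<bar> + \<bar>snd (ys j) p\<bar> \<le> M) sequentially"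
    if H: "HYP \<kappa> ys xbar" for \<kappa> ys xbar
  proof (rule fin_ev_bound, simp, rule ballI)
    fix p assume p: "p \<in> {1..m1}"
    then have pm: "p \<in> {1..m}" using m1_le by simp
    have ys: "ys j \<in> Y (\<kappa> j)" for j using H unfolding HYP_def by blast
    obtain c C where cC: "eventually (\<lambda>j. c \<le> fv (\<kappa> j) p \<and> fv (\<kappa> j) p \<le> C) sequentially"
      using Gfv[OF H pm] by blast
    define T where "T = \<bar>c\<bar> + \<bar>C\<bar> + eps 0"
    obtain M where M: "M \<ge> 0" "\<forall>t s. \<bar>t\<bar> \<le> T \<longrightarrow>
         (s \<in> esubdiff1 (dec_up (Phi m1 phi p)) t \<or> s \<in> esubdiff1 (dec_dn (Phi m1 phi p)) t) \<longrightarrow> \<bar>s\<bar> \<le> M"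
      using SUBB[of p m1 phi T] p phi_convex by auto
    have "eventually (\<lambda>j. \<bar>fst (ys j) p\<bar> + \<bar>snd (ys j) p\<bar> \<le> M + M) sequentially"
      using cC
    proof eventually_elim
      case (elim j)
      have e0: "eps (\<kappa> j) \<le> eps 0" using eps_mono by (simp add: antimonoD)
      have ep: "0 < eps (\<kappa> j)" using eps_pos by simp
      have s0: "sigma ahat (\<kappa> j) p = 0" using sig0 p by blast
      have "\<bar>fU (\<kappa> j) p\<bar> \<le> T"
        using fU_ge[of "\<kappa> j"] fU_le[of "\<kappa> j"] pm s0 elim e0 ep unfolding T_def by fastforce
      then have a1: "\<bar>fst (ys j) p\<bar> \<le> M"
        using M(2) y1sub[OF ys pm] by blast
      have a2: "\<bar>snd (ys j) p\<bar> \<le> M"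
      proof (cases "p \<in> I2 m m1 phi")
        case True
        then have "\<bar>fL (\<kappa> j) p\<bar> \<le> T"
          using fL_ge[of "\<kappa> j"] fL_le[of "\<kappa> j"] pm elim e0 ep unfolding T_def by fastforce
        then show ?thesis using M(2) y2sub[OF ys pm] by blast
      next
        case False then show ?thesis using y2zero[OF ys pm False] M(1) by simp
      qed
      show ?case using a1 a2 by linarith
    qed
    then show "\<exists>M. eventually (\<lambda>j. \<bar>fst (ys j) p\<bar> + \<bar>snd (ys j) p\<bar> \<le> M) sequentially" by blast
  qed
  have Ginv: "(\<lambda>j. 1 / tau (\<kappa> j) (ys j)) \<longlonglongrightarrow> 0" if H: "HYP \<kappa> ys xbar" for \<kappa> ys xbar
  proof -
    have ys: "ys j \<in> Y (\<kappa> j)" "real j \<le> ynorm m (ys j)" for j using H unfolding HYP_def by blast+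
    obtain M where M: "eventually (\<lambda>j. \<forall>p\<in>{1..m1}. \<bar>fst (ys j) p\<bar> + \<bar>snd (ys j) p\<bar> \<le> M) sequentially"
      using Gsmall[OF H] by blast
    have "eventually (\<lambda>j. real j - real m1 * M \<le> tau (\<kappa> j) (ys j)) sequentially"
      using M
    proof eventually_elim
      case (elim j)
      have "real j \<le> ynorm m (ys j)" using ys(2) .
      also have "\<dots> \<le> (\<Sum>p\<in>{1..m}. \<bar>fst (ys j) p\<bar> + \<bar>snd (ys j) p\<bar>)" by (rule ynorm_le)
      also have "\<dots> = (\<Sum>p\<in>{1..m1}. \<bar>fst (ys j) p\<bar> + \<bar>snd (ys j) p\<bar>) + (\<Sum>p\<in>{m1<..m}. \<bar>fst (ys j) p\<bar> + \<bar>snd (ys j) p\<bar>)"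
        by (rule sum_split_m1[OF m1_le])
      also have "(\<Sum>p\<in>{m1<..m}. \<bar>fst (ys j) p\<bar> + \<bar>snd (ys j) p\<bar>) = Lam (ys j)"
        unfolding Lam_def using bigp[OF ys(1)] by (intro sum.cong) auto
      also have "(\<Sum>p\<in>{1..m1}. \<bar>fst (ys j) p\<bar> + \<bar>snd (ys j) p\<bar>) \<le> (\<Sum>p\<in>{1..m1}. M)"
        using elim by (intro sum_mono) auto
      finally show ?case using tau_ge[of "ys j" "\<kappa> j"] by simp
    qed
    then show ?thesis by (rule tends_inv_lin)
  qed
  have EXTRACT: "\<exists>r L. strict_mono r \<and> (\<forall>p\<in>{1..m}. (\<lambda>j. Qv (\<kappa> (r j)) (ys (r j)) p) \<longlonglongrightarrow> L p)"
    if H: "HYP \<kappa> ys xbar" for \<kappa> ys xbar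
  proof -
    have ys: "ys j \<in> Y (\<kappa> j)" for j using H unfolding HYP_def by blast
    obtain M where M: "eventually (\<lambda>j. \<forall>p\<in>{1..m1}. \<bar>fst (ys j) p\<bar> + \<bar>snd (ys j) p\<bar> \<le> M) sequentially"
      using Gsmall[OF H] by blast
    have pos1: "0 < 1 + norm w" for w :: 'a by (simp add: add_pos_nonneg)
    have nb: "norm ((1 / (1 + norm w)) *\<^sub>R w) \<le> 1" for w :: 'a
      using pos1[of w] by (simp add: divide_le_eq_1)
    have rb: "norm (1 / (1 + norm w)) \<le> 1" for w :: 'a
      using pos1[of w] by (simp add: divide_le_eq_1)
    have "\<forall>p\<in>{1..m}. bounded (range (\<lambda>j. Qv (\<kappa> j) (ys j) p))"
    proof
      fix p assume p: "p \<in> {1..m}"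
      have b1: "bounded (range (\<lambda>j. (1 / tau (\<kappa> j) (ys j)) *\<^sub>R W (\<kappa> j) (ys j) p))"
      proof (rule ev_bounded_range[of _ 1], rule always_eventually, rule allI)
        fix j
        have "norm (W (\<kappa> j) (ys j) p) \<le> tau (\<kappa> j) (ys j)" by (rule W_le[OF ys p])
        then show "norm ((1 / tau (\<kappa> j) (ys j)) *\<^sub>R W (\<kappa> j) (ys j) p) \<le> 1"
          using tau_ge1[OF ys, of j] by (simp add: divide_le_eq_1)
      qed
      have b2: "bounded (range (\<lambda>j. (1 / (1 + norm (Ut (\<kappa> j) (ys j) p))) *\<^sub>R Ut (\<kappa> j) (ys j) p))"
        by (rule ev_bounded_range[of _ 1], rule always_eventually, rule allI, rule nb)
      have b3: "bounded (range (\<lambda>j. (1 / (1 + norm (Vt (\<kappa> j) (ys j) p))) *\<^sub>R Vt (\<kappa> j) (ys j) p))"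
        by (rule ev_bounded_range[of _ 1], rule always_eventually, rule allI, rule nb)
      have b4: "bounded (range (\<lambda>j. 1 / (1 + norm (Ut (\<kappa> j) (ys j) p))))"
        by (rule ev_bounded_range[of _ 1], rule always_eventually, rule allI, rule rb)
      have b5: "bounded (range (\<lambda>j. 1 / (1 + norm (Vt (\<kappa> j) (ys j) p))))"
        by (rule ev_bounded_range[of _ 1], rule always_eventually, rule allI, rule rb)
      have b6: "bounded (range (\<lambda>j. fst (ys j) p / tau (\<kappa> j) (ys j)))"
      proof (rule ev_bounded_range[of _ "max 1 M"])
        show "eventually (\<lambda>j. norm (fst (ys j) p / tau (\<kappa> j) (ys j)) \<le> max 1 M) sequentially"
          using M
        proof eventually_elim
          case (elim j)
          have t1: "1 \<le> tau (\<kappa> j) (ys j)" by (rule tau_ge1[OF ys])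
          show ?case
          proof (cases "p \<le> m1")
            case True
            then have "\<bar>fst (ys j) p\<bar> \<le> M" using elim p by force
            moreover have "\<bar>fst (ys j) p\<bar> / tau (\<kappa> j) (ys j) \<le> \<bar>fst (ys j) p\<bar>"
              using t1 by (simp add: divide_le_eq mult_le_cancel_left1 mult_left_mono[of 1 _ "\<bar>fst (ys j) p\<bar>", simplified])
            ultimately show ?thesis using t1 by (simp add: abs_div)
          next
            case False
            then have pb: "p \<in> {m1<..m}" using p by simp
            have "0 \<le> fst (ys j) p" "fst (ys j) p \<le> tau (\<kappa> j) (ys j)" using bigp[OF ys pb] y1_le[OF ys pb] by auto
            then have "fst (ys j) p / tau (\<kappa> j) (ys j) \<le> 1" using t1 by (simp add: divide_le_eq_1)
            moreover have "0 \<le> fst (ys j) p / tau (\<kappa> j) (ys j)" using \<open>0 \<le> fst (ys j) p\<close> t1 by simp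
            ultimately show ?thesis by simp
          qed
        qed
      qed
      obtain c C where cC: "eventually (\<lambda>j. c \<le> fv (\<kappa> j) p \<and> fv (\<kappa> j) p \<le> C) sequentially"
        using Gfv[OF H p] by blast
      have b7: "bounded (range (\<lambda>j. fv (\<kappa> j) p))"
      proof (rule ev_bounded_range[of _ "\<bar>c\<bar> + \<bar>C\<bar>"])
        show "eventually (\<lambda>j. norm (fv (\<kappa> j) p) \<le> \<bar>c\<bar> + \<bar>C\<bar>) sequentially"
          using cC by eventually_elim auto
      qed
      show "bounded (range (\<lambda>j. Qv (\<kappa> j) (ys j) p))"
        unfolding Qv_def
        by (intro bounded_pair_range b1 b2 b3 b4 b5 b6 b7)
    qed
    from finite_subseq_conv[OF _ this] show ?thesis by auto
  qed
  have ncone_small: "0 \<in> ncone1 {s. Phi m1 phi p s \<noteq> \<infinity>} t" if "p \<le> m1" for p t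
    using that by (simp add: ncone1_def Phi_def)
  have ncone_big: "e \<in> ncone1 {s. Phi m1 phi p s \<noteq> \<infinity>} t"
    if "m1 < p" "t \<le> 0" "0 \<le> e" "0 < e \<longrightarrow> t = 0" for p t e
  proof -
    have C: "{s. Phi m1 phi p s \<noteq> \<infinity>} = {s. s \<le> 0}" using that(1) by (auto simp: Phi_big)
    have "e * (z - t) \<le> 0" if "z \<le> 0" for z
    proof (cases "e = 0")
      case False
      then have "t = 0" using \<open>0 < e \<longrightarrow> t = 0\<close> \<open>0 \<le> e\<close> by simp
      then show ?thesis using \<open>0 \<le> e\<close> that by (simp add: mult_nonneg_nonpos)
    qed simp
    then show ?thesis unfolding C ncone1_def using that(2) by simp
  qed
  have CONTRA: False
    if H: "HYP \<kappa> ys xbar"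
    and Hd: "xbar \<in> (\<Inter>p\<in>{1..m}. domF m1 phi f p) \<longrightarrow> (\<forall>p\<in>I2 m m1 phi. dAinf g h p xbar = {0})"
    and HL: "\<forall>p\<in>{1..m}. (\<lambda>j. Qv (\<kappa> j) (ys j) p) \<longlonglongrightarrow> L p"
    for \<kappa> ys xbar L
  proof -
    have sm: "strict_mono \<kappa>" and ys: "\<And>j. ys j \<in> Y (\<kappa> j)" using H unfolding HYP_def by blast+
    define T where "T j = tau (\<kappa> j) (ys j)" for j
    have Tpos: "0 < T j" for j using tau_ge1[OF ys] unfolding T_def by (smt (verit))
    have invT: "(\<lambda>j. 1 / T j) \<longlonglongrightarrow> 0" unfolding T_def by (rule Ginv[OF H])
    define \<omega> where "\<omega> p = fst (fst (L p))" for p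
    define \<alpha> where "\<alpha> p = snd (fst (L p))" for p
    define \<alpha>' where "\<alpha>' p = fst (fst (snd (L p)))" for p
    define \<beta> where "\<beta> p = fst (snd (fst (snd (L p))))" for p
    define \<beta>' where "\<beta>' p = snd (snd (fst (snd (L p))))" for p
    define \<eta> where "\<eta> p = fst (snd (snd (L p)))" for p
    define tt where "tt p = snd (snd (snd (L p)))" for p
    have c\<omega>: "(\<lambda>j. (1 / T j) *\<^sub>R W (\<kappa> j) (ys j) p) \<longlonglongrightarrow> \<omega> p" if "p \<in> {1..m}" for p
      using tendsto_fst[OF tendsto_fst[OF HL[rule_format, OF that]]] by (simp add: Qv_def \<omega>_def T_def)
    have c\<alpha>: "(\<lambda>j. (1 / (1 + norm (Ut (\<kappa> j) (ys j) p))) *\<^sub>R Ut (\<kappa> j) (ys j) p) \<longlonglongrightarrow> \<alpha> p" if "p \<in> {1..m}" for p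
      using tendsto_snd[OF tendsto_fst[OF HL[rule_format, OF that]]] by (simp add: Qv_def \<alpha>_def)
    have c\<alpha>': "(\<lambda>j. (1 / (1 + norm (Vt (\<kappa> j) (ys j) p))) *\<^sub>R Vt (\<kappa> j) (ys j) p) \<longlonglongrightarrow> \<alpha>' p" if "p \<in> {1..m}" for p
      using tendsto_fst[OF tendsto_fst[OF tendsto_snd[OF HL[rule_format, OF that]]]] by (simp add: Qv_def \<alpha>'_def)
    have c\<beta>: "(\<lambda>j. 1 / (1 + norm (Ut (\<kappa> j) (ys j) p))) \<longlonglongrightarrow> \<beta> p" if "p \<in> {1..m}" for p
      using tendsto_fst[OF tendsto_snd[OF tendsto_fst[OF tendsto_snd[OF HL[rule_format, OF that]]]]] by (simp add: Qv_def \<beta>_def)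
    have c\<beta>': "(\<lambda>j. 1 / (1 + norm (Vt (\<kappa> j) (ys j) p))) \<longlonglongrightarrow> \<beta>' p" if "p \<in> {1..m}" for p
      using tendsto_snd[OF tendsto_snd[OF tendsto_fst[OF tendsto_snd[OF HL[rule_format, OF that]]]]] by (simp add: Qv_def \<beta>'_def)
    have c\<eta>: "(\<lambda>j. fst (ys j) p / T j) \<longlonglongrightarrow> \<eta> p" if "p \<in> {1..m}" for p
      using tendsto_fst[OF tendsto_snd[OF tendsto_snd[OF HL[rule_format, OF that]]]] by (simp add: Qv_def \<eta>_def T_def)
    have ctt: "(\<lambda>j. fv (\<kappa> j) p) \<longlonglongrightarrow> tt p" if "p \<in> {1..m}" for p
      using tendsto_snd[OF tendsto_snd[OF tendsto_snd[OF HL[rule_format, OF that]]]] by (simp add: Qv_def tt_def)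
    have xdom: "xbar \<in> (\<Inter>p\<in>{1..m}. domF m1 phi f p)"
    proof
      fix p assume p: "p \<in> {1..m}"
      show "xbar \<in> domF m1 phi f p"
      proof (cases "p \<le> m1")
        case True then show ?thesis by (simp add: domF_def Phi_def)
      next
        case False
        then have pb: "p \<in> {m1<..m}" using p by simp
        have "(\<lambda>z. ereal (f p z)) xbar \<le> 0"
        proof (rule epi_sub[OF f_epi[rule_format, OF p] sm Gxn[OF H]])
          show "\<forall>j. ereal (dcf g h (\<kappa> j) p (xn (\<kappa> j))) \<le> 0"
            using fv_le0 pb unfolding fv_def by simp
        qed
        then have "f p xbar \<le> 0" by simp
        then show ?thesis using False by (simp add: domF_def Phi_def)
      qed
    qed
    have dA0: "\<forall>p\<in>I2 m m1 phi. dAinf g h p xbar = {0}" using Hd xdom by blast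
    have del0: "(\<lambda>j. del (\<kappa> j)) \<longlonglongrightarrow> 0" using LIMSEQ_subseq_LIMSEQ[OF del_lim sm] by (simp add: o_def)
    have delb: "del (\<kappa> j) \<le> del 0" for j using del_mono by (simp add: antimonoD)
    have GEN: "0 \<le> \<beta>0 \<and>
        (\<beta>0 = 0 \<longrightarrow> norm \<alpha>0 = 1 \<and> (\<forall>c>0. c *\<^sub>R \<alpha>0 \<in> dAinf g h p xbar) \<and>
            (\<lambda>j. norm ((1 / (1 + norm (Ts j))) *\<^sub>R Ts j)) \<longlonglongrightarrow> 1) \<and>
        (\<beta>0 \<noteq> 0 \<longrightarrow> Us \<longlonglongrightarrow> (1 / \<beta>0) *\<^sub>R \<alpha>0 \<and> (1 / \<beta>0) *\<^sub>R \<alpha>0 \<in> dA g h p xbar)"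
      if G1: "\<forall>j. Ts j \<in> dcsub g h (\<kappa> j) p (Zs j)" and G2: "Zs \<longlonglongrightarrow> xbar"
        and G3: "\<forall>j. norm (Ts j - Us j) \<le> del (\<kappa> j)"
        and G4: "(\<lambda>j. (1 / (1 + norm (Ts j))) *\<^sub>R Ts j) \<longlonglongrightarrow> \<alpha>0"
        and G5: "(\<lambda>j. 1 / (1 + norm (Ts j))) \<longlonglongrightarrow> \<beta>0"
      for Ts Zs Us \<beta>0 \<alpha>0 p
    proof -
      have pos: "0 < 1 + norm (Ts j)" for j by (simp add: add_pos_nonneg)
      have b0: "0 \<le> \<beta>0" by (rule tendsto_lowerbound[OF G5]) (use pos in \<open>simp_all add: less_imp_le\<close>)
      have nQ: "norm ((1 / (1 + norm (Ts j))) *\<^sub>R Ts j) = 1 - 1 / (1 + norm (Ts j))" for j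
        using pos[of j] by (simp add: field_simps)
      have A: "norm \<alpha>0 = 1 \<and> (\<forall>c>0. c *\<^sub>R \<alpha>0 \<in> dAinf g h p xbar) \<and>
            (\<lambda>j. norm ((1 / (1 + norm (Ts j))) *\<^sub>R Ts j)) \<longlonglongrightarrow> 1" if z: "\<beta>0 = 0"
      proof (intro conjI allI impI)
        have "(\<lambda>j. 1 - 1 / (1 + norm (Ts j))) \<longlonglongrightarrow> 1 - \<beta>0" by (rule tendsto_diff[OF tendsto_const G5])
        then have "(\<lambda>j. 1 - 1 / (1 + norm (Ts j))) \<longlonglongrightarrow> 1" using z by simp
        then show n1: "(\<lambda>j. norm ((1 / (1 + norm (Ts j))) *\<^sub>R Ts j)) \<longlonglongrightarrow> 1" unfolding nQ .
        show "norm \<alpha>0 = 1" using LIMSEQ_unique[OF tendsto_norm[OF G4] n1] .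
        fix c :: real assume c: "0 < c"
        show "c *\<^sub>R \<alpha>0 \<in> dAinf g h p xbar"
        proof (rule dAinf_intro[OF sm G2 G1, of "\<lambda>j. c * (1 / (1 + norm (Ts j)))"])
          show "\<forall>j. 0 < c * (1 / (1 + norm (Ts j)))" using c pos by simp
          show "(\<lambda>j. c * (1 / (1 + norm (Ts j)))) \<longlonglongrightarrow> 0"
            using tendsto_mult[OF tendsto_const G5, of c] z by simp
          show "(\<lambda>j. (c * (1 / (1 + norm (Ts j)))) *\<^sub>R Ts j) \<longlonglongrightarrow> c *\<^sub>R \<alpha>0"
            using tendsto_scaleR[OF tendsto_const G4, of c] by (simp add: scaleR_scaleR)
        qed
      qed
      have B: "Us \<longlonglongrightarrow> (1 / \<beta>0) *\<^sub>R \<alpha>0 \<and> (1 / \<beta>0) *\<^sub>R \<alpha>0 \<in> dA g h p xbar" if nz: "\<beta>0 \<noteq> 0"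
      proof -
        have "(\<lambda>j. (1 / (1 / (1 + norm (Ts j)))) *\<^sub>R ((1 / (1 + norm (Ts j))) *\<^sub>R Ts j)) \<longlonglongrightarrow> (1 / \<beta>0) *\<^sub>R \<alpha>0"
          by (rule tendsto_scaleR[OF tendsto_divide[OF tendsto_const G5 nz] G4])
        moreover have "(1 / (1 / (1 + norm (Ts j)))) *\<^sub>R ((1 / (1 + norm (Ts j))) *\<^sub>R Ts j) = Ts j" for j
          using pos[of j] by (simp add: scaleR_scaleR)
        ultimately have cT: "Ts \<longlonglongrightarrow> (1 / \<beta>0) *\<^sub>R \<alpha>0" by simp
        have d0: "(\<lambda>j. Ts j - Us j) \<longlonglongrightarrow> 0"
          by (rule Lim_null_comparison[OF _ del0]) (use G3 in simp)
        have "(\<lambda>j. Ts j - (Ts j - Us j)) \<longlonglongrightarrow> (1 / \<beta>0) *\<^sub>R \<alpha>0 - 0" by (rule tendsto_diff[OF cT d0])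
        then have "Us \<longlonglongrightarrow> (1 / \<beta>0) *\<^sub>R \<alpha>0" by simp
        moreover have "(1 / \<beta>0) *\<^sub>R \<alpha>0 \<in> dA g h p xbar" by (rule dA_intro[OF sm G2 G1 cT])
        ultimately show ?thesis by blast
      qed
      show ?thesis using b0 A B by blast
    qed
    have GU: "0 \<le> \<beta> p \<and>
        (\<beta> p = 0 \<longrightarrow> norm (\<alpha> p) = 1 \<and> (\<forall>c>0. c *\<^sub>R \<alpha> p \<in> dAinf g h p xbar) \<and>
            (\<lambda>j. norm ((1 / (1 + norm (Ut (\<kappa> j) (ys j) p))) *\<^sub>R Ut (\<kappa> j) (ys j) p)) \<longlonglongrightarrow> 1) \<and>
        (\<beta> p \<noteq> 0 \<longrightarrow> (\<lambda>j. U (\<kappa> j) (ys j) p) \<longlonglongrightarrow> (1 / \<beta> p) *\<^sub>R \<alpha> p \<and> (1 / \<beta> p) *\<^sub>R \<alpha> p \<in> dA g h p xbar)"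
      if p: "p \<in> {1..m}" for p
    proof -
      have g1: "\<forall>j. Ut (\<kappa> j) (ys j) p \<in> dcsub g h (\<kappa> j) p (Zu (\<kappa> j) (ys j) p)" using UtZu[OF ys p] by blast
      have g2: "(\<lambda>j. Zu (\<kappa> j) (ys j) p) \<longlonglongrightarrow> xbar"
        by (rule lim_either[OF Gxn[OF H] Gxo[OF H]]) (use UtZu[OF ys p] in blast)
      have g3: "\<forall>j. norm (Ut (\<kappa> j) (ys j) p - U (\<kappa> j) (ys j) p) \<le> del (\<kappa> j)" using UtZu[OF ys p] by blast
      show ?thesis by (rule GEN[OF g1 g2 g3 c\<alpha>[OF p] c\<beta>[OF p]])
    qed
    have GV: "0 \<le> \<beta>' p \<and>
        (\<beta>' p = 0 \<longrightarrow> norm (\<alpha>' p) = 1 \<and> (\<forall>c>0. c *\<^sub>R \<alpha>' p \<in> dAinf g h p xbar) \<and>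
            (\<lambda>j. norm ((1 / (1 + norm (Vt (\<kappa> j) (ys j) p))) *\<^sub>R Vt (\<kappa> j) (ys j) p)) \<longlonglongrightarrow> 1) \<and>
        (\<beta>' p \<noteq> 0 \<longrightarrow> (\<lambda>j. V (\<kappa> j) (ys j) p) \<longlonglongrightarrow> (1 / \<beta>' p) *\<^sub>R \<alpha>' p \<and> (1 / \<beta>' p) *\<^sub>R \<alpha>' p \<in> dA g h p xbar)"
      if p: "p \<in> {1..m}" for p
    proof -
      have g1: "\<forall>j. Vt (\<kappa> j) (ys j) p \<in> dcsub g h (\<kappa> j) p (Zv (\<kappa> j) (ys j) p)" using VtZv[OF ys p] by blast
      have g2: "(\<lambda>j. Zv (\<kappa> j) (ys j) p) \<longlonglongrightarrow> xbar"
        by (rule lim_either[OF Gxn[OF H] Gxo[OF H]]) (use VtZv[OF ys p] in blast)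
      have g3: "\<forall>j. norm (Vt (\<kappa> j) (ys j) p - V (\<kappa> j) (ys j) p) \<le> del (\<kappa> j)" using VtZv[OF ys p] by blast
      show ?thesis by (rule GEN[OF g1 g2 g3 c\<alpha>'[OF p] c\<beta>'[OF p]])
    qed
    have sum\<omega>: "(\<Sum>p\<in>{1..m}. \<omega> p) = 0"
    proof -
      have e: "(\<Sum>p\<in>{1..m}. (1 / T j) *\<^sub>R W (\<kappa> j) (ys j) p) = - ((1 / T j) *\<^sub>R (lam *\<^sub>R (xn (\<kappa> j) - xo (\<kappa> j))))" for j
      proof -
        have "(\<Sum>p\<in>{1..m}. W (\<kappa> j) (ys j) p) = - (lam *\<^sub>R (xn (\<kappa> j) - xo (\<kappa> j)))"
          using Yeq[OF ys] unfolding W_def by (simp add: eq_neg_iff_add_eq_0)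
        then show ?thesis by (simp add: scaleR_sum_right[symmetric])
      qed
      have "(\<lambda>j. \<Sum>p\<in>{1..m}. (1 / T j) *\<^sub>R W (\<kappa> j) (ys j) p) \<longlonglongrightarrow> (\<Sum>p\<in>{1..m}. \<omega> p)"
        by (rule tendsto_sum) (use c\<omega> in simp)
      moreover have "(\<lambda>j. - ((1 / T j) *\<^sub>R (lam *\<^sub>R (xn (\<kappa> j) - xo (\<kappa> j))))) \<longlonglongrightarrow> - (0 *\<^sub>R (lam *\<^sub>R 0))"
        by (intro tendsto_minus tendsto_scaleR invT tendsto_const Gdiff[OF H])
      ultimately show ?thesis unfolding e using LIMSEQ_unique by fastforce
    qed
    have sum1: "(\<Sum>p\<in>{m1<..m}. \<eta> p) + (\<Sum>p\<in>{1..m}. norm (\<omega> p)) = 1"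
    proof -
      have e: "1 / T j + (\<Sum>p\<in>{m1<..m}. fst (ys j) p / T j) + (\<Sum>p\<in>{1..m}. norm ((1 / T j) *\<^sub>R W (\<kappa> j) (ys j) p)) = 1" for j
      proof -
        define S where "S = (\<Sum>p\<in>{1..m}. norm (W (\<kappa> j) (ys j) p))"
        have TS: "T j = 1 + Lam (ys j) + S" by (simp add: T_def tau_def S_def)
        have e1: "(\<Sum>p\<in>{m1<..m}. fst (ys j) p / T j) = Lam (ys j) / T j" by (simp add: Lam_def sum_divide_distrib)
        have e2: "(\<Sum>p\<in>{1..m}. norm ((1 / T j) *\<^sub>R W (\<kappa> j) (ys j) p)) = S / T j"
          using Tpos[of j] by (simp add: S_def sum_divide_distrib)
        have "1 / T j + Lam (ys j) / T j + S / T j = (1 + Lam (ys j) + S) / T j" by (simp add: add_divide_distrib)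
        also have "\<dots> = 1" using Tpos[of j] TS by simp
        finally show ?thesis using e1 e2 by simp
      qed
      have "(\<lambda>j. 1 / T j + (\<Sum>p\<in>{m1<..m}. fst (ys j) p / T j) + (\<Sum>p\<in>{1..m}. norm ((1 / T j) *\<^sub>R W (\<kappa> j) (ys j) p)))
          \<longlonglongrightarrow> 0 + (\<Sum>p\<in>{m1<..m}. \<eta> p) + (\<Sum>p\<in>{1..m}. norm (\<omega> p))"
        by (intro tendsto_add invT tendsto_sum tendsto_norm) (use c\<eta> c\<omega> in auto)
      then show ?thesis unfolding e using LIMSEQ_unique[OF tendsto_const] by fastforce
    qed
    have ttT: "tt p \<in> Tset (dcf g h) p xbar" if p: "p \<in> {1..m}" for p
      by (rule Tset_intro[OF sm Gxn[OF H]]) (use ctt[OF p] in \<open>simp add: fv_def\<close>)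
    obtain Msm where Msm: "eventually (\<lambda>j. \<forall>p\<in>{1..m1}. \<bar>fst (ys j) p\<bar> + \<bar>snd (ys j) p\<bar> \<le> Msm) sequentially"
      using Gsmall[OF H] by blast
    have \<eta>small: "\<eta> p = 0" if p: "p \<in> {1..m1}" for p
    proof -
      have pm: "p \<in> {1..m}" using p m1_le by simp
      have "eventually (\<lambda>j. norm (fst (ys j) p) \<le> Msm) sequentially"
        using Msm by eventually_elim (use p in force)
      from null_bounded[OF this invT] have "(\<lambda>j. fst (ys j) p / T j) \<longlonglongrightarrow> 0" by simp
      then show ?thesis using LIMSEQ_unique[OF c\<eta>[OF pm]] by simp
    qed
    have \<eta>big: "tt p \<le> 0 \<and> 0 \<le> \<eta> p \<and> (0 < \<eta> p \<longrightarrow> tt p = 0)" if p: "p \<in> {m1<..m}" for p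
    proof (intro conjI impI)
      have pm: "p \<in> {1..m}" using p by simp
      show "tt p \<le> 0" by (rule tendsto_upperbound[OF ctt[OF pm]]) (use fv_le0 p in auto)
      have "eventually (\<lambda>j. 0 \<le> fst (ys j) p / T j) sequentially"
        by (intro always_eventually allI divide_nonneg_pos bigp(1)[OF ys p] Tpos)
      then show "0 \<le> \<eta> p" by (rule tendsto_lowerbound[OF c\<eta>[OF pm]]) simp
      assume "0 < \<eta> p"
      then have "eventually (\<lambda>j. 0 < fst (ys j) p / T j) sequentially"
        using order_tendstoD(1)[OF c\<eta>[OF pm]] by blast
      then have ev: "eventually (\<lambda>j. fU (\<kappa> j) p = 0) sequentially"
      proof eventually_elim
        case (elim j)
        then have "0 < fst (ys j) p" using Tpos[of j] by (simp add: zero_less_divide_iff)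
        then show ?case using y1big[OF ys p] by blast
      qed
      have sg: "(\<lambda>j. sigma ahat (\<kappa> j) p) \<longlonglongrightarrow> 0"
        using LIMSEQ_subseq_LIMSEQ[OF sigma_lim[of ahat p, OF ahat_summable[rule_format, OF p]] sm] by (simp add: o_def)
      have ep: "(\<lambda>j. eps (\<kappa> j)) \<longlonglongrightarrow> 0" using LIMSEQ_subseq_LIMSEQ[OF eps_lim sm] by (simp add: o_def)
      have "(\<lambda>j. fv (\<kappa> j) p) \<longlonglongrightarrow> 0"
      proof (rule tendsto_sandwich[of "\<lambda>j. - sigma ahat (\<kappa> j) p - eps (\<kappa> j)" _ _ "\<lambda>j. - sigma ahat (\<kappa> j) p"])
        show "eventually (\<lambda>j. - sigma ahat (\<kappa> j) p - eps (\<kappa> j) \<le> fv (\<kappa> j) p) sequentially"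
          using ev
        proof eventually_elim
          case (elim j)
          have "fU (\<kappa> j) p \<le> fv (\<kappa> j) p + sigma ahat (\<kappa> j) p + eps (\<kappa> j)" using fU_le[of "\<kappa> j"] pm by blast
          then show ?case using elim by linarith
        qed
        show "eventually (\<lambda>j. fv (\<kappa> j) p \<le> - sigma ahat (\<kappa> j) p) sequentially"
          using ev
        proof eventually_elim
          case (elim j)
          have "fv (\<kappa> j) p + sigma ahat (\<kappa> j) p \<le> fU (\<kappa> j) p" using fU_ge[of "\<kappa> j"] pm by blast
          then show ?case using elim by linarith
        qed
        show "(\<lambda>j. - sigma ahat (\<kappa> j) p - eps (\<kappa> j)) \<longlonglongrightarrow> 0"
          using tendsto_diff[OF tendsto_minus[OF sg] ep] by simp
        show "(\<lambda>j. - sigma ahat (\<kappa> j) p) \<longlonglongrightarrow> 0"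
          using tendsto_minus[OF sg] by simp
      qed
      then show "tt p = 0" using LIMSEQ_unique[OF ctt[OF pm]] by simp
    qed
    have I2facts: "\<beta> p \<noteq> 0 \<and> \<omega> p = 0" if pI: "p \<in> I2 m m1 phi" for p
    proof -
      have ps: "p \<in> {1..m1}" using pI I2sub by blast
      then have pm: "p \<in> {1..m}" using m1_le by simp
      have d0: "dAinf g h p xbar = {0}" using dA0 pI by blast
      have bnz: "\<beta> p \<noteq> 0"
      proof
        assume "\<beta> p = 0"
        then have n: "norm (\<alpha> p) = 1" and al: "\<forall>c>0. c *\<^sub>R \<alpha> p \<in> dAinf g h p xbar" using GU[OF pm] by blast+
        have "1 *\<^sub>R \<alpha> p \<in> dAinf g h p xbar" using al[rule_format, of 1] by simp
        then show False using d0 n by simp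
      qed
      have bnz': "\<beta>' p \<noteq> 0"
      proof
        assume "\<beta>' p = 0"
        then have n: "norm (\<alpha>' p) = 1" and al: "\<forall>c>0. c *\<^sub>R \<alpha>' p \<in> dAinf g h p xbar" using GV[OF pm] by blast+
        have "1 *\<^sub>R \<alpha>' p \<in> dAinf g h p xbar" using al[rule_format, of 1] by simp
        then show False using d0 n by simp
      qed
      have cU: "(\<lambda>j. U (\<kappa> j) (ys j) p) \<longlonglongrightarrow> (1 / \<beta> p) *\<^sub>R \<alpha> p" using GU[OF pm] bnz by blast
      have cV: "(\<lambda>j. V (\<kappa> j) (ys j) p) \<longlonglongrightarrow> (1 / \<beta>' p) *\<^sub>R \<alpha>' p" using GV[OF pm] bnz' by blast
      define K where "K = norm ((1 / \<beta> p) *\<^sub>R \<alpha> p) + norm ((1 / \<beta>' p) *\<^sub>R \<alpha>' p) + 2"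
      have K0: "0 \<le> K" unfolding K_def by simp
      have "eventually (\<lambda>j. norm (W (\<kappa> j) (ys j) p) \<le> Msm * K) sequentially"
        using conv_ev_bounded[OF cU] conv_ev_bounded[OF cV] Msm
      proof eventually_elim
        case (elim j)
        have nU: "norm (U (\<kappa> j) (ys j) p) \<le> K" using elim(1) norm_ge_zero[of "(1 / \<beta>' p) *\<^sub>R \<alpha>' p"] unfolding K_def by linarith
        have nV: "norm (V (\<kappa> j) (ys j) p) \<le> K" using elim(2) norm_ge_zero[of "(1 / \<beta> p) *\<^sub>R \<alpha> p"] unfolding K_def by linarith
        have sm1: "\<bar>fst (ys j) p\<bar> + \<bar>snd (ys j) p\<bar> \<le> Msm" using elim(3) ps by blast
        have "norm (W (\<kappa> j) (ys j) p) \<le> \<bar>fst (ys j) p\<bar> * norm (U (\<kappa> j) (ys j) p) + \<bar>snd (ys j) p\<bar> * norm (V (\<kappa> j) (ys j) p)"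
          unfolding W_def using norm_triangle_ineq[of "fst (ys j) p *\<^sub>R U (\<kappa> j) (ys j) p" "snd (ys j) p *\<^sub>R V (\<kappa> j) (ys j) p"] by simp
        also have "\<dots> \<le> \<bar>fst (ys j) p\<bar> * K + \<bar>snd (ys j) p\<bar> * K"
          using nU nV by (intro add_mono mult_left_mono) auto
        also have "\<dots> = (\<bar>fst (ys j) p\<bar> + \<bar>snd (ys j) p\<bar>) * K" by (simp add: distrib_right)
        also have "\<dots> \<le> Msm * K" using sm1 K0 by (rule mult_right_mono)
        finally show ?case .
      qed
      from null_bounded[OF this invT] have "(\<lambda>j. (1 / T j) *\<^sub>R W (\<kappa> j) (ys j) p) \<longlonglongrightarrow> 0" .
      then have "\<omega> p = 0" using LIMSEQ_unique[OF c\<omega>[OF pm]] by simp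
      then show ?thesis using bnz by simp
    qed
    have monofacts: "(\<beta> p \<noteq> 0 \<longrightarrow> \<omega> p = \<eta> p *\<^sub>R ((1 / \<beta> p) *\<^sub>R \<alpha> p)) \<and>
        (\<beta> p = 0 \<longrightarrow> \<eta> p = 0 \<and> \<omega> p = norm (\<omega> p) *\<^sub>R \<alpha> p)"
      if pm: "p \<in> {1..m}" and pn: "p \<notin> I2 m m1 phi" for p
    proof (intro conjI impI)
      have y2: "snd (ys j) p = 0" for j by (rule y2zero[OF ys pm pn])
      have y1: "0 \<le> fst (ys j) p" for j by (rule y1nn[OF ys pm pn])
      have Wq: "(1 / T j) *\<^sub>R W (\<kappa> j) (ys j) p = (fst (ys j) p / T j) *\<^sub>R U (\<kappa> j) (ys j) p" for j
        by (simp add: W_def y2)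
      {
        assume bnz: "\<beta> p \<noteq> 0"
        have cU: "(\<lambda>j. U (\<kappa> j) (ys j) p) \<longlonglongrightarrow> (1 / \<beta> p) *\<^sub>R \<alpha> p" using GU[OF pm] bnz by blast
        have "(\<lambda>j. (1 / T j) *\<^sub>R W (\<kappa> j) (ys j) p) \<longlonglongrightarrow> \<eta> p *\<^sub>R ((1 / \<beta> p) *\<^sub>R \<alpha> p)"
          unfolding Wq by (rule tendsto_scaleR[OF c\<eta>[OF pm] cU])
        then show "\<omega> p = \<eta> p *\<^sub>R ((1 / \<beta> p) *\<^sub>R \<alpha> p)" using LIMSEQ_unique[OF c\<omega>[OF pm]] by simp
      }
      assume bz: "\<beta> p = 0"
      have na: "norm (\<alpha> p) = 1" and n1: "(\<lambda>j. norm ((1 / (1 + norm (Ut (\<kappa> j) (ys j) p))) *\<^sub>R Ut (\<kappa> j) (ys j) p)) \<longlonglongrightarrow> 1"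
        using GU[OF pm] bz by blast+
      define q where "q j = fst (ys j) p / T j" for j
      define Q4 where "Q4 j = 1 / (1 + norm (Ut (\<kappa> j) (ys j) p))" for j
      define Q3 where "Q3 j = Q4 j *\<^sub>R Ut (\<kappa> j) (ys j) p" for j
      define c where "c j = q j * (1 + norm (Ut (\<kappa> j) (ys j) p))" for j
      have cq: "q \<longlonglongrightarrow> \<eta> p" unfolding q_def by (rule c\<eta>[OF pm])
      have q0: "0 \<le> q j" for j unfolding q_def using y1[of j] Tpos[of j] by simp
      have pos: "0 < 1 + norm (Ut (\<kappa> j) (ys j) p)" for j by (simp add: add_pos_nonneg)
      have c0: "0 \<le> c j" for j unfolding c_def using q0[of j] pos[of j] by simp
      have qU: "q j * norm (U (\<kappa> j) (ys j) p) \<le> 1" for j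
      proof -
        have "q j * norm (U (\<kappa> j) (ys j) p) = norm ((1 / T j) *\<^sub>R W (\<kappa> j) (ys j) p)"
          unfolding Wq q_def using y1[of j] Tpos[of j] by simp
        also have "\<dots> = norm (W (\<kappa> j) (ys j) p) / T j" using Tpos[of j] by simp
        also have "\<dots> \<le> 1" using W_le[OF ys pm] Tpos[of j] by (simp add: T_def divide_le_eq_1)
        finally show ?thesis .
      qed
      have dUt: "norm (Ut (\<kappa> j) (ys j) p - U (\<kappa> j) (ys j) p) \<le> del 0" for j
        using UtZu[OF ys pm] delb[of j] order_trans by blast
      have nUt: "norm (Ut (\<kappa> j) (ys j) p) \<le> norm (U (\<kappa> j) (ys j) p) + del 0" for j
        using norm_triangle_ineq[of "U (\<kappa> j) (ys j) p" "Ut (\<kappa> j) (ys j) p - U (\<kappa> j) (ys j) p"] dUt[of j] by simp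
      have cb: "eventually (\<lambda>j. norm (c j) \<le> (norm (\<eta> p) + 1) * (1 + del 0) + 1) sequentially"
        using conv_ev_bounded[OF cq]
      proof eventually_elim
        case (elim j)
        have "c j = q j + q j * norm (Ut (\<kappa> j) (ys j) p)" unfolding c_def by (simp add: distrib_left)
        also have "\<dots> \<le> q j + q j * (norm (U (\<kappa> j) (ys j) p) + del 0)"
          using nUt[of j] q0[of j] by (intro add_left_mono mult_left_mono) auto
        also have "\<dots> = q j * (1 + del 0) + q j * norm (U (\<kappa> j) (ys j) p)" by (simp add: algebra_simps)
        also have "\<dots> \<le> (norm (\<eta> p) + 1) * (1 + del 0) + 1"
          using elim qU[of j] q0[of j] del_pos by (intro add_mono mult_right_mono) (auto simp: less_imp_le)
        finally show ?case using c0[of j] by simp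
      qed
      have Q40: "Q4 \<longlonglongrightarrow> 0" unfolding Q4_def using c\<beta>[OF pm] bz by simp
      have qe: "q = (\<lambda>j. Q4 j * c j)" proof (rule ext)
        fix j show "q j = Q4 j * c j" unfolding Q4_def c_def using pos[of j] by simp
      qed
      have "(\<lambda>j. Q4 j *\<^sub>R c j) \<longlonglongrightarrow> 0" by (rule null_bounded[OF cb Q40])
      then have q00: "q \<longlonglongrightarrow> 0" unfolding qe by simp
      then show "\<eta> p = 0" using LIMSEQ_unique[OF cq] by simp
      have split: "(1 / T j) *\<^sub>R W (\<kappa> j) (ys j) p = c j *\<^sub>R Q3 j + q j *\<^sub>R (U (\<kappa> j) (ys j) p - Ut (\<kappa> j) (ys j) p)" for j
      proof -
        have "c j *\<^sub>R Q3 j = q j *\<^sub>R Ut (\<kappa> j) (ys j) p"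
          unfolding c_def Q3_def Q4_def using pos[of j] by (simp add: scaleR_scaleR)
        then show ?thesis unfolding Wq q_def[symmetric] by (simp add: scaleR_diff_right)
      qed
      have r0: "(\<lambda>j. q j *\<^sub>R (U (\<kappa> j) (ys j) p - Ut (\<kappa> j) (ys j) p)) \<longlonglongrightarrow> 0"
      proof (rule null_bounded[OF _ q00])
        show "eventually (\<lambda>j. norm (U (\<kappa> j) (ys j) p - Ut (\<kappa> j) (ys j) p) \<le> del 0) sequentially"
          by (intro always_eventually allI) (metis dUt norm_minus_commute)
      qed
      have "(\<lambda>j. (1 / T j) *\<^sub>R W (\<kappa> j) (ys j) p - q j *\<^sub>R (U (\<kappa> j) (ys j) p - Ut (\<kappa> j) (ys j) p)) \<longlonglongrightarrow> \<omega> p - 0"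
        by (rule tendsto_diff[OF c\<omega>[OF pm] r0])
      then have cQ3: "(\<lambda>j. c j *\<^sub>R Q3 j) \<longlonglongrightarrow> \<omega> p" by (simp add: split)
      have nQ3: "(\<lambda>j. norm (Q3 j)) \<longlonglongrightarrow> 1" using n1 unfolding Q3_def Q4_def .
      have "eventually (\<lambda>j. norm (Q3 j) \<noteq> 0) sequentially"
        using tendsto_imp_eventually_ne[OF nQ3, of 0] by simp
      then have "eventually (\<lambda>j. norm (c j *\<^sub>R Q3 j) / norm (Q3 j) = c j) sequentially"
        by eventually_elim (use c0 in simp)
      moreover have "(\<lambda>j. norm (c j *\<^sub>R Q3 j) / norm (Q3 j)) \<longlonglongrightarrow> norm (\<omega> p) / 1"
        by (rule tendsto_divide[OF tendsto_norm[OF cQ3] nQ3]) simp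
      ultimately have cc: "c \<longlonglongrightarrow> norm (\<omega> p)" using Lim_transform_eventually[of "\<lambda>j. norm (c j *\<^sub>R Q3 j) / norm (Q3 j)" "norm (\<omega> p) / 1" sequentially c] by simp
      have cQ: "(\<lambda>j. Q3 j) \<longlonglongrightarrow> \<alpha> p" unfolding Q3_def Q4_def using c\<alpha>[OF pm] .
      have "(\<lambda>j. c j *\<^sub>R Q3 j) \<longlonglongrightarrow> norm (\<omega> p) *\<^sub>R \<alpha> p" by (rule tendsto_scaleR[OF cc cQ])
      then show "\<omega> p = norm (\<omega> p) *\<^sub>R \<alpha> p" by (rule LIMSEQ_unique[OF cQ3])
    qed
    define PP where "PP p YV \<longleftrightarrow> fst YV *\<^sub>R snd YV = \<omega> p \<and>
        ((fst YV \<in> (\<Union>t\<in>Tset (dcf g h) p xbar. ncone1 {s. Phi m1 phi p s \<noteq> \<infinity>} t) \<and> snd YV \<in> convex hull (dA g h p xbar))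
          \<or> snd YV \<in> dAinf g h p xbar - {0}) \<and>
        (fst YV = 0 \<longrightarrow> \<omega> p = 0 \<and> \<eta> p = 0)" for p and YV :: "real \<times> 'a"
    have exPP: "\<forall>p\<in>{1..m}. \<exists>YV. PP p YV"
    proof
      fix p assume pm: "p \<in> {1..m}"
      have tT: "tt p \<in> Tset (dcf g h) p xbar" by (rule ttT[OF pm])
      show "\<exists>YV. PP p YV"
      proof (cases "p \<in> I2 m m1 phi")
        case True
        then have ps: "p \<in> {1..m1}" using I2sub by blast
        have bnz: "\<beta> p \<noteq> 0" and w0: "\<omega> p = 0" using I2facts[OF True] by blast+
        have "(1 / \<beta> p) *\<^sub>R \<alpha> p \<in> dA g h p xbar" using GU[OF pm] bnz by blast
        then have hull: "(1 / \<beta> p) *\<^sub>R \<alpha> p \<in> convex hull (dA g h p xbar)" by (rule hull_inc)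
        have "p \<le> m1" using ps by simp
        then have "0 \<in> (\<Union>t\<in>Tset (dcf g h) p xbar. ncone1 {s. Phi m1 phi p s \<noteq> \<infinity>} t)"
          by (rule UN_I[OF tT ncone_small])
        then have "PP p (0, (1 / \<beta> p) *\<^sub>R \<alpha> p)" unfolding PP_def using hull w0 \<eta>small[OF ps] by (simp only: fst_conv snd_conv) simp
        then show ?thesis by blast
      next
        case False
        note mf = monofacts[OF pm False]
        show ?thesis
        proof (cases "\<beta> p = 0")
          case False
          then have w: "\<omega> p = \<eta> p *\<^sub>R ((1 / \<beta> p) *\<^sub>R \<alpha> p)" using mf by blast
          have "(1 / \<beta> p) *\<^sub>R \<alpha> p \<in> dA g h p xbar" using GU[OF pm] False by blast
          then have hull: "(1 / \<beta> p) *\<^sub>R \<alpha> p \<in> convex hull (dA g h p xbar)" by (rule hull_inc)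
          have nc: "\<eta> p \<in> ncone1 {s. Phi m1 phi p s \<noteq> \<infinity>} (tt p)"
          proof (cases "p \<le> m1")
            case True
            then show ?thesis using \<eta>small[of p] pm ncone_small[OF True] by simp
          next
            case False
            then have pb: "p \<in> {m1<..m}" using pm by simp
            show ?thesis by (rule ncone_big) (use False \<eta>big[OF pb] in auto)
          qed
          have "\<eta> p \<in> (\<Union>t\<in>Tset (dcf g h) p xbar. ncone1 {s. Phi m1 phi p s \<noteq> \<infinity>} t)"
            by (rule UN_I[where B="\<lambda>t. ncone1 {s. Phi m1 phi p s \<noteq> \<infinity>} t", OF tT nc])
          then have "PP p (\<eta> p, (1 / \<beta> p) *\<^sub>R \<alpha> p)" unfolding PP_def using hull w by simp
          then show ?thesis by blast
        next
          case True
          then have e0: "\<eta> p = 0" and w: "\<omega> p = norm (\<omega> p) *\<^sub>R \<alpha> p" using mf by blast+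
          have na: "norm (\<alpha> p) = 1" and al: "\<forall>c>0. c *\<^sub>R \<alpha> p \<in> dAinf g h p xbar" using GU[OF pm] True by blast+
          show ?thesis
          proof (cases "\<omega> p = 0")
            case True
            have "1 *\<^sub>R \<alpha> p \<in> dAinf g h p xbar" using al[rule_format, of 1] by simp
            then have "\<alpha> p \<in> dAinf g h p xbar - {0}" using na by auto
            then have "PP p (0, \<alpha> p)" unfolding PP_def using True e0 by simp
            then show ?thesis by blast
          next
            case False
            then have "0 < norm (\<omega> p)" by simp
            then have "norm (\<omega> p) *\<^sub>R \<alpha> p \<in> dAinf g h p xbar" using al by blast
            then have "\<omega> p \<in> dAinf g h p xbar" by (simp only: w[symmetric])
            then have "\<omega> p \<in> dAinf g h p xbar - {0}" using False by simp
            then have "PP p (1, \<omega> p)" unfolding PP_def by simp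
            then show ?thesis by blast
          qed
        qed
      qed
    qed
    obtain F where F: "\<forall>p\<in>{1..m}. PP p (F p)" using bchoice[OF exPP] by blast
    have "\<forall>p\<in>{1..m}. fst (F p) = 0"
    proof (rule mp[OF spec[OF spec[OF bspec[OF CQ xdom], of "\<lambda>p. fst (F p)"], of "\<lambda>p. snd (F p)"]], intro conjI)
      have "(\<Sum>p\<in>{1..m}. fst (F p) *\<^sub>R snd (F p)) = (\<Sum>p\<in>{1..m}. \<omega> p)"
      proof (rule sum.cong)
        fix p assume "p \<in> {1..m}"
        then have "PP p (F p)" using F by blast
        then show "fst (F p) *\<^sub>R snd (F p) = \<omega> p" unfolding PP_def by (elim conjE)
      qed simp
      then show "(\<Sum>p\<in>{1..m}. fst (F p) *\<^sub>R snd (F p)) = 0" using sum\<omega> by simp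
      show "\<forall>p\<in>{1..m}. (fst (F p) \<in> (\<Union>t\<in>Tset (dcf g h) p xbar. ncone1 {s. Phi m1 phi p s \<noteq> \<infinity>} t) \<and>
             snd (F p) \<in> convex hull (dA g h p xbar)) \<or> snd (F p) \<in> dAinf g h p xbar - {0}"
      proof
        fix p assume "p \<in> {1..m}"
        then have "PP p (F p)" using F by blast
        then show "(fst (F p) \<in> (\<Union>t\<in>Tset (dcf g h) p xbar. ncone1 {s. Phi m1 phi p s \<noteq> \<infinity>} t) \<and>
             snd (F p) \<in> convex hull (dA g h p xbar)) \<or> snd (F p) \<in> dAinf g h p xbar - {0}"
          unfolding PP_def by (elim conjE)
      qed
    qed
    then have z: "\<omega> p = 0 \<and> \<eta> p = 0" if "p \<in> {1..m}" for p
    proof -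
      have "PP p (F p)" "fst (F p) = 0" using F \<open>\<forall>p\<in>{1..m}. fst (F p) = 0\<close> that by blast+
      then show ?thesis unfolding PP_def by (elim conjE) (erule mp)
    qed
    have "(\<Sum>p\<in>{m1<..m}. \<eta> p) = 0" using z by (intro sum.neutral) auto
    moreover have "(\<Sum>p\<in>{1..m}. norm (\<omega> p)) = 0" using z by (intro sum.neutral) auto
    ultimately show False using sum1 by simp
  qed
  have CORE: False
    if H: "HYP \<kappa> ys xbar"
    and Hd: "xbar \<in> (\<Inter>p\<in>{1..m}. domF m1 phi f p) \<longrightarrow> (\<forall>p\<in>I2 m m1 phi. dAinf g h p xbar = {0})"
    for \<kappa> ys xbar
  proof -
    obtain r L where rL: "strict_mono r" "\<forall>p\<in>{1..m}. (\<lambda>j. Qv (\<kappa> (r j)) (ys (r j)) p) \<longlonglongrightarrow> L p"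
      using EXTRACT[OF H] by blast
    have sm: "strict_mono \<kappa>" and xc: "(\<lambda>j. x (Suc (\<kappa> j))) \<longlonglongrightarrow> xbar"
      and ys: "\<forall>j. ys j \<in> Y (\<kappa> j) \<and> real j \<le> ynorm m (ys j)" using H unfolding HYP_def by blast+
    have "HYP (\<kappa> \<circ> r) (ys \<circ> r) xbar"
      unfolding HYP_def
    proof (intro conjI allI)
      show "strict_mono (\<kappa> \<circ> r)" using sm rL(1) by (rule strict_mono_o)
      show "(\<lambda>j. x (Suc ((\<kappa> \<circ> r) j))) \<longlonglongrightarrow> xbar"
        using LIMSEQ_subseq_LIMSEQ[OF xc rL(1)] by (simp add: o_def)
      fix j
      show "(ys \<circ> r) j \<in> Y ((\<kappa> \<circ> r) j)" using ys by simp
      have "real j \<le> real (r j)" using seq_suble[OF rL(1)] by simp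
      also have "\<dots> \<le> ynorm m (ys (r j))" using ys by blast
      finally show "real j \<le> ynorm m ((ys \<circ> r) j)" by simp
    qed
    moreover have "\<forall>p\<in>{1..m}. (\<lambda>j. Qv ((\<kappa> \<circ> r) j) ((ys \<circ> r) j) p) \<longlonglongrightarrow> L p" using rL(2) by simp
    ultimately show False using CONTRA Hd by blast
  qed
  show ?thesis
  proof (intro conjI impI allI)
    fix N xbar
    assume A: "infinite N \<and> conv_along N (\<lambda>k. x (Suc k)) xbar \<and> (\<forall>p\<in>I2 m m1 phi. dAinf g h p xbar = {0})"
    have "\<exists>Bd. \<forall>k\<in>N. \<forall>y\<in>Y k. ynorm m y \<le> Bd"
    proof (rule ccontr)
      assume "\<not> (\<exists>Bd. \<forall>k\<in>N. \<forall>y\<in>Y k. ynorm m y \<le> Bd)"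
      from unb[OF allI[OF PK] this] obtain \<kappa> ys where
        kys: "strict_mono \<kappa>" "\<forall>j. \<kappa> j \<in> N \<and> ys j \<in> Y (\<kappa> j) \<and> real j \<le> ynorm m (ys j)" by blast
      have "(\<lambda>j. x (Suc (\<kappa> j))) \<longlonglongrightarrow> xbar"
        using conv_along_sub[of N "\<lambda>k. x (Suc k)" xbar \<kappa>] A kys by blast
      then have "HYP \<kappa> ys xbar" unfolding HYP_def using kys by blast
      then show False using CORE A by blast
    qed
    then show "\<exists>B. \<forall>k\<in>N. \<forall>y\<in>Yset m m1 phi lam
              (\<lambda>p. fup g h ahat (a k (ik k)) k p (xx k (ik k)))
              (\<lambda>p. flo g h (b k (ik k)) k p (xx k (ik k)))
              (xx k (Suc (ik k))) (xx k (ik k)). ynorm m y \<le> B" by (simp add: Y_def)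
  next
    assume A: "bounded (range x) \<and>
        (\<forall>z\<in>(\<Inter>p\<in>{1..m}. domF m1 phi f p). \<forall>p\<in>I2 m m1 phi. dAinf g h p z = {0})"
    have "\<exists>Bd. \<forall>k\<in>UNIV. \<forall>y\<in>Y k. ynorm m y \<le> Bd"
    proof (rule ccontr)
      assume "\<not> (\<exists>Bd. \<forall>k\<in>UNIV. \<forall>y\<in>Y k. ynorm m y \<le> Bd)"
      from unb[OF allI[OF PK] this] obtain \<kappa> ys where
        kys: "strict_mono \<kappa>" "\<forall>j. ys j \<in> Y (\<kappa> j) \<and> real j \<le> ynorm m (ys j)" by blast
      have "range (\<lambda>j. x (Suc (\<kappa> j))) \<subseteq> range x" by auto
      then have "bounded (range (\<lambda>j. x (Suc (\<kappa> j))))" using A bounded_subset by blast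
      then obtain xbar r where r: "strict_mono r" "((\<lambda>j. x (Suc (\<kappa> j))) \<circ> r) \<longlonglongrightarrow> xbar"
        using bounded_imp_convergent_subsequence by blast
      have "HYP (\<kappa> \<circ> r) (ys \<circ> r) xbar"
        unfolding HYP_def
      proof (intro conjI allI)
        show "strict_mono (\<kappa> \<circ> r)" using kys(1) r(1) by (rule strict_mono_o)
        show "(\<lambda>j. x (Suc ((\<kappa> \<circ> r) j))) \<longlonglongrightarrow> xbar" using r(2) by (simp add: o_def)
        fix j
        show "(ys \<circ> r) j \<in> Y ((\<kappa> \<circ> r) j)" using kys by simp
        have "real j \<le> real (r j)" using seq_suble[OF r(1)] by simp
        also have "\<dots> \<le> ynorm m (ys (r j))" using kys by blast
        finally show "real j \<le> ynorm m ((ys \<circ> r) j)" by simp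
      qed
      then show False using CORE A by blast
    qed
    then show "\<exists>B. \<forall>k. \<forall>y\<in>Yset m m1 phi lam
              (\<lambda>p. fup g h ahat (a k (ik k)) k p (xx k (ik k)))
              (\<lambda>p. flo g h (b k (ik k)) k p (xx k (ik k)))
              (xx k (Suc (ik k))) (xx k (ik k)). ynorm m y \<le> B" by (simp add: Y_def)
  qed
qed

end
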